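(* Let $p$ be a prime and let $P$ be a finite $p$-group which can be generated by at most two elements. Let $f$ be a prime power such that $\mathrm{PSL}(2,f)$ is a non-abelian simple group, and suppose $\mathrm{PSL}(2,f)$ acts on $P$ via automorphisms. Then the action of $\mathrm{PSL}(2,f)$ on $P$ is trivial. *)

theory Defs
  imports "HOL-Algebra.Algebra"
begin

text \<open>2x2 matrices over a ring K, written as tuples (a, b, c, d) for the matrix
  with rows (a b) and (c d). SL(2,K) with matrix multiplication.\<close>

definition mat2_mult :: "('a, 'b) ring_scheme \<Rightarrow> ('a \<times> 'a \<times> 'a \<times> 'a) \<Rightarrow> ('a \<times> 'a \<times> 'a \<times> 'a) \<Rightarrow> ('a \<times> 'a \<times> 'a \<times> 'a)" where
  "mat2_mult K M N = (case M of (a, b, c, d) \<Rightarrow> case N of (e, f, g, h) \<Rightarrow>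
                       ((a \<otimes>\<^bsub>K\<^esub> e) \<oplus>\<^bsub>K\<^esub> (b \<otimes>\<^bsub>K\<^esub> g), (a \<otimes>\<^bsub>K\<^esub> f) \<oplus>\<^bsub>K\<^esub> (b \<otimes>\<^bsub>K\<^esub> h),
                        (c \<otimes>\<^bsub>K\<^esub> e) \<oplus>\<^bsub>K\<^esub> (d \<otimes>\<^bsub>K\<^esub> g), (c \<otimes>\<^bsub>K\<^esub> f) \<oplus>\<^bsub>K\<^esub> (d \<otimes>\<^bsub>K\<^esub> h)))"

definition SL2_carrier :: "('a, 'b) ring_scheme \<Rightarrow> ('a \<times> 'a \<times> 'a \<times> 'a) set" where
  "SL2_carrier K = {(a, b, c, d). a \<in> carrier K \<and> b \<in> carrier K \<and> c \<in> carrier K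
                         \<and> d \<in> carrier K \<and> (a \<otimes>\<^bsub>K\<^esub> d) \<ominus>\<^bsub>K\<^esub> (b \<otimes>\<^bsub>K\<^esub> c) = \<one>\<^bsub>K\<^esub>}"

definition mat2_id :: "('a, 'b) ring_scheme \<Rightarrow> ('a \<times> 'a \<times> 'a \<times> 'a)" where
  "mat2_id K = (\<one>\<^bsub>K\<^esub>, \<zero>\<^bsub>K\<^esub>, \<zero>\<^bsub>K\<^esub>, \<one>\<^bsub>K\<^esub>)"

definition SL2 :: "('a, 'b) ring_scheme \<Rightarrow> ('a \<times> 'a \<times> 'a \<times> 'a) monoid" where
  "SL2 K = \<lparr> carrier = SL2_carrier K, Group.monoid.mult = mat2_mult K,
             one = mat2_id K \<rparr>"

definition SL2_centre :: "('a, 'b) ring_scheme \<Rightarrow> ('a \<times> 'a \<times> 'a \<times> 'a) set" where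
  "SL2_centre K = {(\<one>\<^bsub>K\<^esub>, \<zero>\<^bsub>K\<^esub>, \<zero>\<^bsub>K\<^esub>, \<one>\<^bsub>K\<^esub>),
                   (\<ominus>\<^bsub>K\<^esub> \<one>\<^bsub>K\<^esub>, \<zero>\<^bsub>K\<^esub>, \<zero>\<^bsub>K\<^esub>, \<ominus>\<^bsub>K\<^esub> \<one>\<^bsub>K\<^esub>)}"

definition PSL2 :: "('a, 'b) ring_scheme \<Rightarrow> ('a \<times> 'a \<times> 'a \<times> 'a) set monoid" where
  "PSL2 K = SL2 K Mod SL2_centre K"

end

theory Submission
  imports Defs
begin

lemma fix_count:
  fixes H (structure)
  assumes grp: "group H" and q: "Factorial_Ring.prime (q::nat)" and ord: "order H = q ^ k"
    and finS: "finite S"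
    and cl: "\<And>h s. h \<in> carrier H \<Longrightarrow> s \<in> S \<Longrightarrow> act h s \<in> S"
    and one: "\<And>s. s \<in> S \<Longrightarrow> act \<one> s = s"
    and mul: "\<And>g h s. g \<in> carrier H \<Longrightarrow> h \<in> carrier H \<Longrightarrow> s \<in> S \<Longrightarrow> act (g \<otimes> h) s = act g (act h s)"
  shows "q dvd card (S - {s \<in> S. \<forall>h \<in> carrier H. act h s = s})"
proof -
  interpret H: group H by (rule grp)
  define F where "F = {s \<in> S. \<forall>h \<in> carrier H. act h s = s}"
  define \<psi> where "\<psi> = (\<lambda>h. restrict (act h) S)"
  have inv1: "act (inv h) (act h s) = s" if "h \<in> carrier H" "s \<in> S" for h s
    using that by (metis H.inv_closed H.l_inv mul one)
  have inv2: "act h (act (inv h) s) = s" if "h \<in> carrier H" "s \<in> S" for h s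
    using that by (metis H.inv_closed H.r_inv mul one)
  have bij: "\<psi> h \<in> Bij S" if h: "h \<in> carrier H" for h
  proof -
    have "bij_betw (act h) S S"
      by (rule bij_betwI[where g="act (inv h)"]) (use h cl inv1 inv2 in auto)
    then show ?thesis unfolding Bij_def \<psi>_def
      by (simp add: bij_betw_def inj_on_def)
  qed
  have hom: "group_hom H (BijGroup S) \<psi>"
  proof (rule group_hom.intro)
    show "group H" by (rule grp)
    show "group (BijGroup S)" by (rule group_BijGroup)
    show "group_hom_axioms H (BijGroup S) \<psi>"
    proof
      show "\<psi> \<in> hom H (BijGroup S)"
      proof (rule homI)
        show "\<psi> x \<in> carrier (BijGroup S)" if "x \<in> carrier H" for x
          using bij[OF that] by (simp add: BijGroup_def)
        show "\<psi> (x \<otimes> y) = \<psi> x \<otimes>\<^bsub>BijGroup S\<^esub> \<psi> y" if "x \<in> carrier H" "y \<in> carrier H" for x y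
          using that bij[of x] bij[of y] unfolding BijGroup_def
          by (auto simp: \<psi>_def compose_def mul cl fun_eq_iff)
      qed
    qed
  qed
  interpret A: group_action H S \<psi> by (rule group_action.intro[OF hom])
  have orb: "orbit H \<psi> y = (\<lambda>g. act g y) ` carrier H" if "y \<in> S" for y
    using that by (auto simp: orbit_def \<psi>_def)
  have finO: "finite (orbit H \<psi> y)" if "y \<in> S" for y
    using that cl finS by (auto simp: orb intro: finite_subset)
  have key: "q dvd (\<Sum>x\<in>Ob. (if x \<in> F then 0 else 1::nat))" if Ob: "Ob \<in> orbits H S \<psi>" for Ob
  proof -
    obtain y where y: "y \<in> S" and Oy: "Ob = orbit H \<psi> y" using Ob by (auto simp: orbits_def)
    show ?thesis
    proof (cases "y \<in> F")
      case True
      then have "Ob = {y}" using y by (auto simp: Oy orb F_def)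
      then show ?thesis using True by simp
    next
      case False
      then obtain h where h: "h \<in> carrier H" "act h y \<noteq> y" using y by (auto simp: F_def)
      have nf: "x \<notin> F" if "x \<in> Ob" for x
      proof
        assume xF: "x \<in> F"
        from that obtain g where g: "g \<in> carrier H" "x = act g y" by (auto simp: Oy orb[OF y])
        have "act (inv g) x = x" using xF g by (auto simp: F_def)
        then have "y = x" using inv1[OF g(1) y] g by simp
        then show False using False xF by simp
      qed
      have sum: "(\<Sum>x\<in>Ob. (if x \<in> F then 0 else 1::nat)) = card Ob"
        using nf by simp
      have "card Ob * card (stabilizer H \<psi> y) = q ^ k"
        using A.orbit_stabilizer_theorem[OF y] ord Oy by simp
      then have "card Ob dvd q ^ k" by (metis dvd_triv_left)
      then obtain i where i: "card Ob = q ^ i" using divides_primepow_nat[OF q] by auto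
      have "y \<in> Ob" using y one[OF y] by (force simp: Oy orb)
      moreover have "act h y \<in> Ob" using y h by (auto simp: Oy orb)
      ultimately have "card Ob \<noteq> 1" using h(2) finO[OF y] Oy by (metis card_1_singletonE singletonD)
      then have "i \<noteq> 0" using i by auto
      then show ?thesis using sum i by simp
    qed
  qed
  have "(\<Sum>Ob\<in>orbits H S \<psi>. \<Sum>x\<in>Ob. (if x \<in> F then 0 else 1::nat)) = (\<Sum>x\<in>S. (if x \<in> F then 0 else 1))"
    by (rule A.disjoint_sum[OF finS])
  also have "\<dots> = card (S - F)"
    using finS by (simp add: sum.If_cases Diff_eq)
  finally have "card (S - F) = (\<Sum>Ob\<in>orbits H S \<psi>. \<Sum>x\<in>Ob. (if x \<in> F then 0 else 1::nat))" by simp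
  moreover have "q dvd (\<Sum>Ob\<in>orbits H S \<psi>. \<Sum>x\<in>Ob. (if x \<in> F then 0 else 1::nat))"
    by (rule dvd_sum) (rule key)
  ultimately show ?thesis unfolding F_def by simp
qed

locale pgrp = group G for G (structure) +
  fixes p :: nat
  assumes p_prime: "Factorial_Ring.prime p" and finG: "finite (carrier G)"
    and ppow: "\<exists>n. order G = p ^ n"
begin

lemma sub_ppow: assumes "subgroup H G" shows "\<exists>j. card H = p ^ j"
proof -
  obtain n where n: "order G = p ^ n" using ppow by blast
  have "card H dvd p ^ n" using lagrange[OF assms] n by (metis dvd_triv_right)
  then show ?thesis using divides_primepow_nat[OF p_prime] by auto
qed

lemma index_ppow: assumes "subgroup H G" shows "\<exists>j. card (rcosets H) = p ^ j"
proof -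
  obtain n where n: "order G = p ^ n" using ppow by blast
  have "card (rcosets H) dvd p ^ n" using lagrange[OF assms] n by (metis dvd_triv_left)
  then show ?thesis using divides_primepow_nat[OF p_prime] by auto
qed

lemma index_dvd: assumes "subgroup H G" "H \<noteq> carrier G" shows "p dvd card (rcosets H)"
proof -
  obtain j where j: "card (rcosets H) = p ^ j" using index_ppow[OF assms(1)] by blast
  have "j \<noteq> 0"
  proof
    assume "j = 0"
    then have "card H = order G" using lagrange[OF assms(1)] j by simp
    then have "H = carrier G" using assms(1) finG
      by (metis card_subset_eq order_def subgroup.subset)
    then show False using assms(2) by simp
  qed
  then show ?thesis using j by simp
qed

lemma norm_grows:
  assumes H: "subgroup H G" and ne: "H \<noteq> carrier G"
  shows "\<exists>a \<in> carrier G. a \<notin> H \<and> (\<forall>h\<in>H. a \<otimes> h \<otimes> inv a \<in> H)"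
proof -
  interpret H: subgroup H G by (rule H)
  define HH where "HH = G\<lparr>carrier := H\<rparr>"
  have gHH: "group HH" unfolding HH_def by (rule subgroup.subgroup_is_group[OF H is_group])
  obtain j where j: "card H = p ^ j" using sub_ppow[OF H] by blast
  define act where "act = (\<lambda>h Y. Y #> (inv h))"
  define S where "S = rcosets H"
  have finS: "finite S" unfolding S_def using finG rcosets_subset_PowG[OF H] by (meson finite_Pow_iff finite_subset)
  have cl: "act h Y \<in> S" if "h \<in> carrier HH" "Y \<in> S" for h Y
  proof -
    from that obtain a where a: "a \<in> carrier G" "Y = H #> a" by (auto simp: S_def RCOSETS_def HH_def)
    have "act h Y = H #> (a \<otimes> inv h)" using a that H.subset by (simp add: act_def HH_def coset_mult_assoc subsetD)
    then show ?thesis using a that by (auto simp: S_def RCOSETS_def HH_def)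
  qed
  have one: "act \<one>\<^bsub>HH\<^esub> Y = Y" if "Y \<in> S" for Y
    using that H.subset by (auto simp: act_def HH_def S_def RCOSETS_def r_coset_subset_G coset_mult_one)
  have mul: "act (g \<otimes>\<^bsub>HH\<^esub> h) Y = act g (act h Y)" if "g \<in> carrier HH" "h \<in> carrier HH" "Y \<in> S" for g h Y
  proof -
    from that obtain a where a: "a \<in> carrier G" "Y = H #> a" by (auto simp: S_def RCOSETS_def)
    have g: "g \<in> carrier G" and h: "h \<in> carrier G" using that by (auto simp: HH_def)
    have M: "H #> a \<subseteq> carrier G" using r_coset_subset_G[OF H.subset a(1)] .
    show ?thesis using a g h
      by (simp add: act_def HH_def coset_mult_assoc[OF M] inv_mult_group)
  qed
  have "p dvd card (S - {s \<in> S. \<forall>h \<in> carrier HH. act h s = s})"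
    by (rule fix_count[OF gHH p_prime _ finS cl one mul]) (simp_all add: HH_def order_def j)
  moreover define F where "F = {s \<in> S. \<forall>h \<in> carrier HH. act h s = s}"
  ultimately have d1: "p dvd card (S - F)" by simp
  have d2: "p dvd card S" unfolding S_def by (rule index_dvd[OF H ne])
  have FS: "F \<subseteq> S" by (auto simp: F_def)
  have "card S = card F + card (S - F)" using FS finS
    by (metis card_Diff_subset card_mono finite_subset le_add_diff_inverse)
  then have d3: "p dvd card F" using d1 d2 by (metis dvd_add_left_iff)
  have HF: "H \<in> F"
  proof -
    have "H \<in> S" unfolding S_def using H.subgroup_in_rcosets[OF is_group] .
    moreover have "act h H = H" if "h \<in> carrier HH" for h
      using that by (simp add: act_def HH_def H.rcos_const[OF is_group])
    ultimately show ?thesis by (auto simp: F_def)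
  qed
  have finF: "finite F" using FS finS finite_subset by blast
  have "card F \<noteq> 0" using HF finF by auto
  then have "card F \<ge> p" using d3 by (simp add: dvd_imp_le)
  moreover have "p \<ge> 2" using p_prime by (simp add: prime_ge_2_nat)
  ultimately have "card F \<ge> 2" by simp
  then obtain Y where Y: "Y \<in> F" "Y \<noteq> H"
    by (metis HF card_1_singletonE card_le_Suc0_iff_eq finF insertI1 not_less_eq_eq numeral_2_eq_2 singletonD)
  then obtain a where a: "a \<in> carrier G" "Y = H #> a" by (auto simp: F_def S_def RCOSETS_def)
  have anH: "a \<notin> H" using a Y H.rcos_const[OF is_group] by auto
  have "a \<otimes> h \<otimes> inv a \<in> H" if h: "h \<in> H" for h
  proof -
    have ih: "inv h \<in> carrier HH" using h by (simp add: HH_def)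
    have hG: "h \<in> carrier G" using h H.subset by auto
    have "act (inv h) Y = Y" using Y(1) ih by (auto simp: F_def)
    then have "H #> (a \<otimes> h) = H #> a" using a hG H.subset by (simp add: act_def coset_mult_assoc)
    moreover have "a \<otimes> h \<in> H #> (a \<otimes> h)" using a hG rcos_self[OF _ H] by simp
    ultimately have "a \<otimes> h \<in> H #> a" by simp
    then show ?thesis using H.rcos_module_imp[OF is_group a(1)] by simp
  qed
  then show ?thesis using a anH by blast
qed

end

lemma (in group) gen_all:
  assumes nosub: "\<And>A. subgroup A G \<Longrightarrow> A = {\<one>} \<or> A = carrier G"
    and x: "x \<in> carrier G" "x \<noteq> \<one>"
  shows "generate G {x} = carrier G"
proof -
  have "subgroup (generate G {x}) G" using x by (simp add: generate_is_subgroup)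
  moreover have "x \<in> generate G {x}" by (simp add: generate.incl)
  ultimately show ?thesis using nosub x by blast
qed

lemma (in group) simple_ppow:
  assumes fin: "finite (carrier G)" and p: "Factorial_Ring.prime (p::nat)"
    and ord: "order G = p ^ j" and j: "j \<ge> 1"
    and nosub: "\<And>A. subgroup A G \<Longrightarrow> A = {\<one>} \<or> A = carrier G"
  shows "order G = p \<and> (\<forall>x \<in> carrier G. \<forall>y \<in> carrier G. x \<otimes> y = y \<otimes> x)"
proof -
  have p1: "p > 1" using p prime_gt_1_nat by blast
  have "p ^ j > 1" using j p1 by (intro one_less_power) auto
  then have "card (carrier G) > 1" using ord by (simp add: order_def)
  have "carrier G \<noteq> {\<one>}" using \<open>card (carrier G) > 1\<close> by auto
  then obtain a where a: "a \<in> carrier G" "a \<noteq> \<one>" using one_closed by blast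
  have ga: "generate G {a} = carrier G" by (rule gen_all[OF nosub a])
  have orda: "ord a = p ^ j" using generate_pow_card[OF a(1)] ga ord by (simp add: order_def)
  have j1: "j = 1"
  proof (rule ccontr)
    assume "j \<noteq> 1"
    then have j2: "j \<ge> 2" using j by simp
    define b where "b = a [^] (p ^ (j - 1))"
    have bc: "b \<in> carrier G" using a by (simp add: b_def)
    have dv: "p ^ (j - 1) dvd ord a" using orda j by (simp add: le_imp_power_dvd)
    have "ord b = ord a div p ^ (j - 1)" unfolding b_def
      by (rule ord_pow[OF a(1) dv]) (use p1 in simp)
    also have "\<dots> = p"
    proof -
      have "p ^ j = p * p ^ (j - 1)" using j by (cases j) auto
      then show ?thesis using orda p1 by simp
    qed
    finally have ob: "ord b = p" .
    have bn: "b \<noteq> \<one>" using ob p1 ord_eq_1[OF bc] by auto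
    have "generate G {b} = carrier G" using gen_all[OF nosub bc bn] .
    then have "p = p ^ j" using generate_pow_card[OF bc] ob ord by (simp add: order_def)
    moreover have "p ^ j \<ge> p ^ 2" using j2 p1 by (intro power_increasing) auto
    moreover have "p ^ 2 > p" using p1 by (simp add: power2_eq_square)
    ultimately show False by simp
  qed
  have comm: "x \<otimes> y = y \<otimes> x" if xy: "x \<in> carrier G" "y \<in> carrier G" for x y
  proof -
    have gp: "generate G {a} = {a [^] k | k. k \<in> (UNIV :: nat set)}"
      by (rule generate_pow_on_finite_carrier[OF fin a(1)])
    have "x \<in> {a [^] k | k. k \<in> (UNIV :: nat set)}" "y \<in> {a [^] k | k. k \<in> (UNIV :: nat set)}"
      using xy ga gp by simp_all
    then obtain k1 k2 where "x = a [^] (k1::nat)" "y = a [^] (k2::nat)" by blast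
    then show ?thesis using a by (simp add: nat_pow_mult add.commute)
  qed
  show ?thesis using j1 ord comm by simp
qed

definition maxsub :: "('g, 'c) monoid_scheme \<Rightarrow> 'g set \<Rightarrow> bool" where
  "maxsub G M \<longleftrightarrow> subgroup M G \<and> M \<noteq> carrier G \<and>
     (\<forall>K. subgroup K G \<longrightarrow> M \<subseteq> K \<longrightarrow> K = M \<or> K = carrier G)"

context pgrp begin

lemma max_normal: assumes mx: "maxsub G M" shows "M \<lhd> G"
proof -
  have M: "subgroup M G" and ne: "M \<noteq> carrier G" using mx by (auto simp: maxsub_def)
  interpret M: subgroup M G by (rule M)
  define N where "N = {a \<in> carrier G. \<forall>h\<in>M. a \<otimes> h \<otimes> inv a \<in> M}"
  have finM: "finite M" using finG M.subset finite_subset by blast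
  have surj: "\<exists>h'\<in>M. h = a \<otimes> h' \<otimes> inv a" if a: "a \<in> N" and h: "h \<in> M" for a h
  proof -
    have aG: "a \<in> carrier G" using a by (simp add: N_def)
    have "inj_on (\<lambda>h. a \<otimes> h \<otimes> inv a) M"
      by (rule inj_onI) (use aG M.subset in auto)
    moreover have "(\<lambda>h. a \<otimes> h \<otimes> inv a) ` M \<subseteq> M" using a by (auto simp: N_def)
    ultimately have "(\<lambda>h. a \<otimes> h \<otimes> inv a) ` M = M" using finM by (simp add: endo_inj_surj)
    then show ?thesis using h by auto
  qed
  have subN: "subgroup N G"
  proof
    show "N \<subseteq> carrier G" by (auto simp: N_def)
    show "x \<otimes> y \<in> N" if "x \<in> N" "y \<in> N" for x y
    proof -
      have x: "x \<in> carrier G" "\<forall>h\<in>M. x \<otimes> h \<otimes> inv x \<in> M" and y: "y \<in> carrier G" "\<forall>h\<in>M. y \<otimes> h \<otimes> inv y \<in> M"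
        using that by (auto simp: N_def)
      have "x \<otimes> y \<otimes> h \<otimes> inv (x \<otimes> y) \<in> M" if h: "h \<in> M" for h
      proof -
        have hG: "h \<in> carrier G" using h M.subset by auto
        have "x \<otimes> y \<otimes> h \<otimes> inv (x \<otimes> y) = x \<otimes> (y \<otimes> h \<otimes> inv y) \<otimes> inv x"
          using x y hG by (simp add: inv_mult_group m_assoc)
        then show ?thesis using x y h by simp
      qed
      then show ?thesis using x y by (auto simp: N_def)
    qed
    show "\<one> \<in> N" using M.subset by (auto simp: N_def subsetD)
    show "inv x \<in> N" if "x \<in> N" for x
    proof -
      have x: "x \<in> carrier G" using that by (simp add: N_def)
      have "inv x \<otimes> h \<otimes> inv (inv x) \<in> M" if h: "h \<in> M" for h
      proof -
        obtain h' where h': "h' \<in> M" "h = x \<otimes> h' \<otimes> inv x" using surj[OF \<open>x \<in> N\<close> h] by blast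
        have "inv x \<otimes> h \<otimes> inv (inv x) = h'" using h' x M.subset
          by (simp add: m_assoc subsetD) (metis inv_closed l_inv l_one m_assoc r_inv r_one subsetD M.subset)
        then show ?thesis using h' by simp
      qed
      then show ?thesis using x by (auto simp: N_def)
    qed
  qed
  have MN: "M \<subseteq> N" using M.subset by (auto simp: N_def subsetD)
  obtain a where a: "a \<in> carrier G" "a \<notin> M" "\<forall>h\<in>M. a \<otimes> h \<otimes> inv a \<in> M"
    using norm_grows[OF M ne] by blast
  have "a \<in> N" using a by (simp add: N_def)
  then have "N \<noteq> M" using a by auto
  then have "N = carrier G" using mx subN MN by (auto simp: maxsub_def)
  then show ?thesis using M by (simp add: normal_inv_iff N_def) blast
qed

lemma max_quot:
  assumes mx: "maxsub G M"
  shows "\<forall>a \<in> carrier G. a [^] p \<in> M"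
    and "\<forall>a \<in> carrier G. \<forall>b \<in> carrier G. a \<otimes> b \<otimes> inv a \<otimes> inv b \<in> M"
proof -
  have nM: "M \<lhd> G" by (rule max_normal[OF mx])
  interpret M: normal M G by (rule nM)
  have sM: "subgroup M G" and ne: "M \<noteq> carrier G" using mx by (auto simp: maxsub_def)
  define Q where "Q = G Mod M"
  interpret Q: group Q unfolding Q_def by (rule M.factorgroup_is_group)
  have finQ: "finite (carrier Q)" using finG by (simp add: Q_def carrier_FactGroup)
  obtain j where j: "card (rcosets M) = p ^ j" using index_ppow[OF sM] by blast
  have "p dvd card (rcosets M)" by (rule index_dvd[OF sM ne])
  then have j1: "j \<ge> 1" using j p_prime
    by (cases j) (auto simp: not_prime_1)
  have ordQ: "order Q = p ^ j" using j by (simp add: Q_def order_def FactGroup_def)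
  have nosub: "A = {\<one>\<^bsub>Q\<^esub>} \<or> A = carrier Q" if A: "subgroup A Q" for A
  proof -
    have sA: "subgroup A (G Mod M)" using A by (simp add: Q_def)
    have U: "\<Union>A = {x \<in> carrier G. M #> x \<in> A}" by (rule M.factgroup_subgroup_union_char[OF sA])
    have sU: "subgroup (\<Union>A) G" by (rule M.factgroup_subgroup_union_subgroup[OF sA])
    have oneA: "M \<in> A" using subgroup.one_closed[OF A] by (simp add: Q_def)
    then have "M \<subseteq> \<Union>A" by auto
    then have "\<Union>A = M \<or> \<Union>A = carrier G" using mx sU by (auto simp: maxsub_def)
    then show ?thesis
    proof
      assume UM: "\<Union>A = M"
      have "A \<subseteq> {M}"
      proof
        fix Y assume Y: "Y \<in> A"
        then have "Y \<in> rcosets M" using subgroup.subset[OF A] by (auto simp: Q_def FactGroup_def)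
        then obtain x where x: "x \<in> carrier G" "Y = M #> x" by (auto simp: RCOSETS_def)
        then have "x \<in> M" using U UM Y by auto
        then show "Y \<in> {M}" using x M.rcos_const[OF is_group] by simp
      qed
      then show ?thesis using oneA by (auto simp: Q_def)
    next
      assume UG: "\<Union>A = carrier G"
      have "carrier Q \<subseteq> A"
      proof
        fix Y assume "Y \<in> carrier Q"
        then obtain x where x: "x \<in> carrier G" "Y = M #> x" by (auto simp: Q_def FactGroup_def RCOSETS_def)
        then show "Y \<in> A" using U UG by auto
      qed
      then show ?thesis using subgroup.subset[OF A] by blast
    qed
  qed
  have res: "order Q = p \<and> (\<forall>x \<in> carrier Q. \<forall>y \<in> carrier Q. x \<otimes>\<^bsub>Q\<^esub> y = y \<otimes>\<^bsub>Q\<^esub> x)"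
    by (rule Q.simple_ppow[OF finQ p_prime ordQ j1 nosub])
  show "\<forall>a \<in> carrier G. a [^] p \<in> M"
  proof
    fix a assume a: "a \<in> carrier G"
    have aQ: "M #> a \<in> carrier Q" using a by (auto simp: Q_def FactGroup_def RCOSETS_def)
    have "(M #> a) [^]\<^bsub>Q\<^esub> p = \<one>\<^bsub>Q\<^esub>" using Q.pow_order_eq_1[OF aQ] res by simp
    then have "M #> (a [^] p) = M" using M.FactGroup_pow[OF a, of p] by (simp add: Q_def)
    then show "a [^] p \<in> M" using rcos_self[OF _ sM, of "a [^] p"] a by simp
  qed
  show "\<forall>a \<in> carrier G. \<forall>b \<in> carrier G. a \<otimes> b \<otimes> inv a \<otimes> inv b \<in> M"
  proof (intro ballI)
    fix a b assume a: "a \<in> carrier G" and b: "b \<in> carrier G"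
    have aQ: "M #> a \<in> carrier Q" and bQ: "M #> b \<in> carrier Q" using a b by (auto simp: Q_def FactGroup_def RCOSETS_def)
    have "(M #> a) <#> (M #> b) = (M #> b) <#> (M #> a)" using res aQ bQ by (simp add: Q_def)
    then have "M #> (a \<otimes> b) = M #> (b \<otimes> a)" using a b by (simp add: M.rcos_sum)
    then have "a \<otimes> b \<in> M #> (b \<otimes> a)" using rcos_self[OF _ sM, of "a \<otimes> b"] a b by simp
    then have "a \<otimes> b \<otimes> inv (b \<otimes> a) \<in> M" using M.rcos_module_imp[OF is_group] a b by simp
    then show "a \<otimes> b \<otimes> inv a \<otimes> inv b \<in> M" using a b by (simp add: inv_mult_group m_assoc)
  qed
qed

end

definition frat :: "('g, 'c) monoid_scheme \<Rightarrow> 'g set" where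
  "frat G = carrier G \<inter> \<Inter>{M. maxsub G M}"

context pgrp begin

lemma frat_sub: "frat G \<subseteq> carrier G" by (auto simp: frat_def)

lemma frat_normal: "frat G \<lhd> G"
proof -
  have sub: "subgroup (frat G) G"
  proof
    show "frat G \<subseteq> carrier G" by (rule frat_sub)
    show "x \<otimes> y \<in> frat G" if "x \<in> frat G" "y \<in> frat G" for x y
      using that by (auto simp: frat_def maxsub_def subgroup.m_closed)
    show "\<one> \<in> frat G" by (auto simp: frat_def maxsub_def subgroup.one_closed)
    show "inv x \<in> frat G" if "x \<in> frat G" for x
    proof -
      have "inv x \<in> M" if "maxsub G M" for M
        using \<open>x \<in> frat G\<close> that by (auto simp: frat_def maxsub_def subgroup.m_inv_closed)
      then show ?thesis using \<open>x \<in> frat G\<close> by (auto simp: frat_def)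
    qed
  qed
  have "g \<otimes> h \<otimes> inv g \<in> frat G" if "g \<in> carrier G" "h \<in> frat G" for g h
  proof -
    have "g \<otimes> h \<otimes> inv g \<in> M" if M: "maxsub G M" for M
    proof -
      interpret normal M G by (rule max_normal[OF M])
      show ?thesis using \<open>g \<in> carrier G\<close> \<open>h \<in> frat G\<close> M inv_op_closed1
        by (auto simp: frat_def) (metis inv_op_closed2)
    qed
    then show ?thesis using that by (auto simp: frat_def)
  qed
  then show ?thesis using sub by (simp add: normal_inv_iff)
qed

lemma frat_pow: "a \<in> carrier G \<Longrightarrow> a [^] p \<in> frat G"
  using max_quot(1) by (auto simp: frat_def)

lemma frat_comm: "a \<in> carrier G \<Longrightarrow> b \<in> carrier G \<Longrightarrow> a \<otimes> b \<otimes> inv a \<otimes> inv b \<in> frat G"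
  using max_quot(2) by (auto simp: frat_def)

lemma exists_max:
  assumes H: "subgroup H G" and ne: "H \<noteq> carrier G"
  shows "\<exists>M. maxsub G M \<and> H \<subseteq> M"
proof -
  define S where "S = {K. subgroup K G \<and> H \<subseteq> K \<and> K \<noteq> carrier G}"
  have finS: "finite S" unfolding S_def
  proof (rule finite_subset[of _ "Pow (carrier G)"])
    show "{K. subgroup K G \<and> H \<subseteq> K \<and> K \<noteq> carrier G} \<subseteq> Pow (carrier G)"
      using subgroup.subset by blast
  qed (use finG in simp)
  have HS: "H \<in> S" using H ne by (simp add: S_def)
  have "Max (card ` S) \<in> card ` S" using finS HS by (intro Max_in) auto
  then obtain K where K: "K \<in> S" "card K = Max (card ` S)" by auto
  have big: "card K' \<le> card K" if "K' \<in> S" for K' unfolding K(2) using finS that by (intro Max_ge) auto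
  have "maxsub G K"
    unfolding maxsub_def
  proof (intro conjI allI impI)
    show "subgroup K G" "K \<noteq> carrier G" using K by (auto simp: S_def)
    fix K' assume K': "subgroup K' G" "K \<subseteq> K'"
    show "K' = K \<or> K' = carrier G"
    proof (cases "K' = carrier G")
      case False
      then have "K' \<in> S" using K K' by (auto simp: S_def)
      then have "card K' \<le> card K" by (rule big)
      moreover have "finite K'" using finite_subset[OF subgroup.subset[OF K'(1)] finG] .
      ultimately have "K' = K" using K'(2) card_seteq by blast
      then show ?thesis by simp
    qed simp
  qed
  then show ?thesis using K by (auto simp: S_def)
qed

lemma nongen:
  assumes H: "subgroup H G" and cov: "\<And>w. w \<in> carrier G \<Longrightarrow> \<exists>h\<in>H. \<exists>f\<in>frat G. w = h \<otimes> f"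
  shows "H = carrier G"
proof (rule ccontr)
  assume "H \<noteq> carrier G"
  then obtain M where M: "maxsub G M" "H \<subseteq> M" using exists_max[OF H] by blast
  have sM: "subgroup M G" using M by (simp add: maxsub_def)
  have "carrier G \<subseteq> M"
  proof
    fix w assume "w \<in> carrier G"
    then obtain h f where "h \<in> H" "f \<in> frat G" "w = h \<otimes> f" using cov by blast
    moreover have "f \<in> M" using \<open>f \<in> frat G\<close> M by (auto simp: frat_def)
    ultimately show "w \<in> M" using M subgroup.m_closed[OF sM] by auto
  qed
  then show False using M sM subgroup.subset unfolding maxsub_def by blast
qed

lemma frat_triv: assumes "frat G = carrier G" shows "carrier G = {\<one>}"
proof -
  have "\<exists>h\<in>{\<one>}. \<exists>f\<in>frat G. w = h \<otimes> f" if "w \<in> carrier G" for w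
    using that assms by auto
  then have "{\<one>} = carrier G" by (rule nongen[OF triv_subgroup])
  then show ?thesis by simp
qed

lemma max_preimage:
  assumes s: "\<sigma> \<in> auto G" and M: "maxsub G M"
  shows "maxsub G {w \<in> carrier G. \<sigma> w \<in> M}"
proof -
  have hom: "\<sigma> \<in> hom G G" and bij: "bij_betw \<sigma> (carrier G) (carrier G)"
    using s by (auto simp: auto_def Bij_def)
  interpret h: group_hom G G \<sigma> by (unfold_locales) (rule hom)
  have sM: "subgroup M G" and neM: "M \<noteq> carrier G" using M by (auto simp: maxsub_def)
  interpret M: subgroup M G by (rule sM)
  define M' where "M' = {w \<in> carrier G. \<sigma> w \<in> M}"
  have sM': "subgroup M' G"
  proof
    show "M' \<subseteq> carrier G" by (auto simp: M'_def)
    show "x \<otimes> y \<in> M'" if "x \<in> M'" "y \<in> M'" for x y using that by (auto simp: M'_def)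
    show "\<one> \<in> M'" by (auto simp: M'_def)
    show "inv x \<in> M'" if "x \<in> M'" for x using that by (auto simp: M'_def)
  qed
  have surj: "\<sigma> ` carrier G = carrier G" using bij by (simp add: bij_betw_def)
  have inj: "inj_on \<sigma> (carrier G)" using bij by (simp add: bij_betw_def)
  have neM': "M' \<noteq> carrier G"
  proof
    assume eq: "M' = carrier G"
    have "carrier G \<subseteq> M"
    proof
      fix z assume "z \<in> carrier G"
      then obtain w where "w \<in> carrier G" "z = \<sigma> w" using surj by blast
      then show "z \<in> M" using eq by (auto simp: M'_def)
    qed
    then show False using neM M.subset by auto
  qed
  have maxl: "K = M' \<or> K = carrier G" if K: "subgroup K G" "M' \<subseteq> K" for K
  proof -
    have sK: "subgroup (\<sigma> ` K) G" by (rule h.subgroup_img_is_subgroup[OF K(1)])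
    have "M \<subseteq> \<sigma> ` K"
    proof
      fix m assume "m \<in> M"
      then obtain w where "w \<in> carrier G" "m = \<sigma> w" using surj M.subset by blast
      then show "m \<in> \<sigma> ` K" using K \<open>m \<in> M\<close> by (auto simp: M'_def)
    qed
    then have "\<sigma> ` K = M \<or> \<sigma> ` K = carrier G" using M sK by (auto simp: maxsub_def)
    then show ?thesis
    proof
      assume "\<sigma> ` K = M"
      then have "K \<subseteq> M'" using K subgroup.subset by (fastforce simp: M'_def)
      then show ?thesis using K by auto
    next
      assume im: "\<sigma> ` K = carrier G"
      have "carrier G \<subseteq> K"
      proof
        fix w assume w: "w \<in> carrier G"
        then obtain k where "k \<in> K" "\<sigma> k = \<sigma> w" using im by (metis h.hom_closed imageE)
        then show "w \<in> K" using inj w K subgroup.subset by (metis inj_on_def subsetD)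
      qed
      then show ?thesis using K subgroup.subset by blast
    qed
  qed
  show ?thesis unfolding maxsub_def M'_def[symmetric] using sM' neM' maxl by blast
qed

lemma auto_frat:
  assumes s: "\<sigma> \<in> auto G" and f: "f \<in> frat G"
  shows "\<sigma> f \<in> frat G"
proof -
  have fG: "f \<in> carrier G" using f frat_sub by auto
  have "\<sigma> f \<in> carrier G" using s fG by (auto simp: auto_def hom_def)
  moreover have "\<sigma> f \<in> M" if "maxsub G M" for M
  proof -
    have "maxsub G {w \<in> carrier G. \<sigma> w \<in> M}" by (rule max_preimage[OF s that])
    then have "f \<in> {w \<in> carrier G. \<sigma> w \<in> M}" using f by (auto simp: frat_def)
    then show ?thesis by simp
  qed
  ultimately show ?thesis by (auto simp: frat_def)
qed

end

context pgrp begin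

definition Qg where "Qg = G Mod (frat G)"
definition pr where "pr a = frat G #> a"

lemma p_gt1: "p > 1" using p_prime prime_gt_1_nat by blast

lemma Q_group: "group Qg"
  unfolding Qg_def by (rule normal.factorgroup_is_group[OF frat_normal])

lemma pr_hom: "pr \<in> hom G Qg"
  unfolding Qg_def pr_def[abs_def] by (rule normal.r_coset_hom_Mod[OF frat_normal])

lemma pr_ghom: "group_hom G Qg pr"
  by (rule group_hom.intro[OF is_group Q_group]) (simp add: group_hom_axioms_def pr_hom)

lemma pr_closed: "a \<in> carrier G \<Longrightarrow> pr a \<in> carrier Qg"
  using pr_hom by (auto simp: hom_def)

lemma pr_mult: "a \<in> carrier G \<Longrightarrow> b \<in> carrier G \<Longrightarrow> pr (a \<otimes> b) = pr a \<otimes>\<^bsub>Qg\<^esub> pr b"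
  using pr_hom by (auto simp: hom_def)

lemma pr_one: "pr \<one> = \<one>\<^bsub>Qg\<^esub>"
  using group_hom.hom_one[OF pr_ghom] .

lemma pr_inv: "a \<in> carrier G \<Longrightarrow> pr (inv a) = inv\<^bsub>Qg\<^esub> (pr a)"
  using group_hom.hom_inv[OF pr_ghom] .

lemma pr_pow: "a \<in> carrier G \<Longrightarrow> pr (a [^] (n::nat)) = pr a [^]\<^bsub>Qg\<^esub> n"
  using group_hom.hom_nat_pow[OF pr_ghom] .

lemma Q_one: "\<one>\<^bsub>Qg\<^esub> = frat G" by (simp add: Qg_def)

lemma pr_surj: "q \<in> carrier Qg \<Longrightarrow> \<exists>a \<in> carrier G. q = pr a"
  by (auto simp: Qg_def pr_def FactGroup_def RCOSETS_def)

lemma pr_one_iff: assumes a: "a \<in> carrier G" shows "pr a = \<one>\<^bsub>Qg\<^esub> \<longleftrightarrow> a \<in> frat G"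
proof
  assume "pr a = \<one>\<^bsub>Qg\<^esub>"
  then have "frat G #> a = frat G" by (simp add: pr_def Q_one)
  then show "a \<in> frat G" using rcos_self[OF a normal_imp_subgroup[OF frat_normal]] by simp
next
  assume "a \<in> frat G"
  then show "pr a = \<one>\<^bsub>Qg\<^esub>" using subgroup.rcos_const[OF normal_imp_subgroup[OF frat_normal] is_group]
    by (simp add: pr_def Q_one)
qed

lemma pr_eq_iff: assumes a: "a \<in> carrier G" and b: "b \<in> carrier G"
  shows "pr a = pr b \<longleftrightarrow> inv a \<otimes> b \<in> frat G"
proof -
  interpret Q: group Qg by (rule Q_group)
  have "pr a = pr b \<longleftrightarrow> inv\<^bsub>Qg\<^esub> (pr a) \<otimes>\<^bsub>Qg\<^esub> pr b = \<one>\<^bsub>Qg\<^esub>"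
    using a b pr_closed by (metis Q.inv_closed Q.inv_equality Q.inv_inv Q.l_inv)
  also have "\<dots> \<longleftrightarrow> pr (inv a \<otimes> b) = \<one>\<^bsub>Qg\<^esub>" using a b by (simp add: pr_mult pr_inv)
  also have "\<dots> \<longleftrightarrow> inv a \<otimes> b \<in> frat G" using a b by (simp add: pr_one_iff)
  finally show ?thesis .
qed

lemma Q_comm: "comm_group Qg"
proof -
  interpret Q: group Qg by (rule Q_group)
  show ?thesis
  proof (rule Q.group_comm_groupI)
    fix u v assume u: "u \<in> carrier Qg" and v: "v \<in> carrier Qg"
    obtain a where a: "a \<in> carrier G" "u = pr a" using pr_surj[OF u] by blast
    obtain b where b: "b \<in> carrier G" "v = pr b" using pr_surj[OF v] by blast
    have "inv (a \<otimes> b) \<otimes> (b \<otimes> a) = inv b \<otimes> inv a \<otimes> inv (inv b) \<otimes> inv (inv a)"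
      using a b by (simp add: inv_mult_group m_assoc)
    also have "\<dots> \<in> frat G" using a b by (intro frat_comm) auto
    finally have "pr (a \<otimes> b) = pr (b \<otimes> a)" using a b by (simp add: pr_eq_iff)
    then show "u \<otimes>\<^bsub>Qg\<^esub> v = v \<otimes>\<^bsub>Qg\<^esub> u" using a b by (simp add: pr_mult)
  qed
qed

lemma Q_exp: assumes "q \<in> carrier Qg" shows "q [^]\<^bsub>Qg\<^esub> p = \<one>\<^bsub>Qg\<^esub>"
proof -
  obtain a where a: "a \<in> carrier G" "q = pr a" using pr_surj[OF assms] by blast
  then show ?thesis using frat_pow[OF a(1)] by (simp add: pr_pow[symmetric] pr_one_iff)
qed

lemma Q_pow_mod: assumes "q \<in> carrier Qg" shows "q [^]\<^bsub>Qg\<^esub> (n::nat) = q [^]\<^bsub>Qg\<^esub> (n mod p)"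
proof -
  interpret Q: group Qg by (rule Q_group)
  have "q [^]\<^bsub>Qg\<^esub> n = q [^]\<^bsub>Qg\<^esub> (p * (n div p) + n mod p)" by simp
  also have "\<dots> = q [^]\<^bsub>Qg\<^esub> (p * (n div p)) \<otimes>\<^bsub>Qg\<^esub> q [^]\<^bsub>Qg\<^esub> (n mod p)"
    using assms by (simp add: Q.nat_pow_mult)
  also have "q [^]\<^bsub>Qg\<^esub> (p * (n div p)) = (q [^]\<^bsub>Qg\<^esub> p) [^]\<^bsub>Qg\<^esub> (n div p)"
    using assms by (simp add: Q.nat_pow_pow)
  also have "\<dots> = \<one>\<^bsub>Qg\<^esub>" using assms by (simp add: Q_exp)
  finally show ?thesis using assms by simp
qed

lemma core:
  assumes x: "x \<in> carrier G" and y: "y \<in> carrier G"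
    and gen: "generate G {x, y} = carrier G"
    and noncyc: "\<not> (\<exists>z \<in> carrier G. generate G {z} = carrier G)"
    and eq: "pr x [^]\<^bsub>Qg\<^esub> (i::nat) \<otimes>\<^bsub>Qg\<^esub> pr y [^]\<^bsub>Qg\<^esub> (j::nat) = \<one>\<^bsub>Qg\<^esub>"
  shows "p dvd j"
proof (rule ccontr)
  assume nd: "\<not> p dvd j"
  interpret Q: comm_group Qg by (rule Q_comm)
  define Xq where "Xq = pr x"
  define Yq where "Yq = pr y"
  have Xq: "Xq \<in> carrier Qg" and Yq: "Yq \<in> carrier Qg" using x y pr_closed by (auto simp: Xq_def Yq_def)
  have j0: "j \<noteq> 0" using nd by (metis dvd_0_right)
  have "coprime p j" using nd p_prime by (simp add: prime_imp_coprime)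
  then have "coprime j p" by (simp add: coprime_commute)
  then have g1: "gcd j p = 1" by simp
  obtain u v where uv: "j * u = p * v + 1" using bezout_nat[OF j0, of p] g1 by auto
  have "(Xq [^]\<^bsub>Qg\<^esub> i \<otimes>\<^bsub>Qg\<^esub> Yq [^]\<^bsub>Qg\<^esub> j) [^]\<^bsub>Qg\<^esub> u = \<one>\<^bsub>Qg\<^esub>"
    using eq by (simp add: Xq_def Yq_def)
  then have "Xq [^]\<^bsub>Qg\<^esub> (i * u) \<otimes>\<^bsub>Qg\<^esub> Yq [^]\<^bsub>Qg\<^esub> (j * u) = \<one>\<^bsub>Qg\<^esub>"
    using Xq Yq by (simp add: Q.pow_mult_distrib Q.m_comm Q.nat_pow_pow)
  moreover have "Yq [^]\<^bsub>Qg\<^esub> (j * u) = Yq"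
  proof -
    have "Yq [^]\<^bsub>Qg\<^esub> (j * u) = (Yq [^]\<^bsub>Qg\<^esub> p) [^]\<^bsub>Qg\<^esub> v \<otimes>\<^bsub>Qg\<^esub> Yq"
      using Yq uv by (simp add: Q.nat_pow_pow Q.nat_pow_mult[symmetric])
    then show ?thesis using Yq by (simp add: Q_exp)
  qed
  ultimately have e2: "Xq [^]\<^bsub>Qg\<^esub> (i * u) \<otimes>\<^bsub>Qg\<^esub> Yq = \<one>\<^bsub>Qg\<^esub>" by simp
  define c where "c = i * u * (p - 1)"
  have YX: "Yq = Xq [^]\<^bsub>Qg\<^esub> c"
  proof -
    have "Xq [^]\<^bsub>Qg\<^esub> (i * u) \<otimes>\<^bsub>Qg\<^esub> Xq [^]\<^bsub>Qg\<^esub> c = (Xq [^]\<^bsub>Qg\<^esub> p) [^]\<^bsub>Qg\<^esub> (i * u)"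
      using Xq p_gt1 by (simp add: c_def Q.nat_pow_mult Q.nat_pow_pow algebra_simps)
    also have "\<dots> = \<one>\<^bsub>Qg\<^esub>" using Xq by (simp add: Q_exp)
    finally have "Xq [^]\<^bsub>Qg\<^esub> (i * u) \<otimes>\<^bsub>Qg\<^esub> Xq [^]\<^bsub>Qg\<^esub> c = \<one>\<^bsub>Qg\<^esub>" .
    then show ?thesis using e2 Xq Yq by (metis Q.inv_equality Q.m_comm Q.nat_pow_closed)
  qed
  define T where "T = {a \<in> carrier G. \<exists>n::nat. pr a = Xq [^]\<^bsub>Qg\<^esub> n}"
  have sT: "subgroup T G"
  proof
    show "T \<subseteq> carrier G" by (auto simp: T_def)
    show "a \<otimes> b \<in> T" if "a \<in> T" "b \<in> T" for a b
      using that Xq by (auto simp: T_def pr_mult Q.nat_pow_mult)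
    show "\<one> \<in> T" by (auto simp: T_def pr_one intro: exI[of _ 0])
    show "inv a \<in> T" if aT: "a \<in> T" for a
    proof -
      obtain n where a: "a \<in> carrier G" "pr a = Xq [^]\<^bsub>Qg\<^esub> (n::nat)" using aT unfolding T_def by blast
      have "Xq [^]\<^bsub>Qg\<^esub> n \<otimes>\<^bsub>Qg\<^esub> Xq [^]\<^bsub>Qg\<^esub> (n * (p - 1)) = (Xq [^]\<^bsub>Qg\<^esub> p) [^]\<^bsub>Qg\<^esub> n"
        using Xq p_gt1 by (simp add: Q.nat_pow_mult Q.nat_pow_pow algebra_simps)
      also have "\<dots> = \<one>\<^bsub>Qg\<^esub>" using Xq by (simp add: Q_exp)
      finally have "inv\<^bsub>Qg\<^esub> (Xq [^]\<^bsub>Qg\<^esub> n) = Xq [^]\<^bsub>Qg\<^esub> (n * (p - 1))"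
        using Xq by (metis Q.inv_equality Q.m_comm Q.nat_pow_closed)
      then show ?thesis using a by (auto simp: T_def pr_inv)
    qed
  qed
  have "pr x = Xq [^]\<^bsub>Qg\<^esub> (1::nat)" using Xq by (simp add: Xq_def)
  then have "x \<in> T" using x unfolding T_def by blast
  moreover have "y \<in> T" using y YX by (auto simp: T_def Yq_def)
  ultimately have "generate G {x, y} \<subseteq> T" using sT by (intro generate_subgroup_incl) auto
  then have allT: "carrier G \<subseteq> T" using gen by simp
  have "generate G {x} = carrier G"
  proof (rule nongen)
    show "subgroup (generate G {x}) G" using x by (intro generate_is_subgroup) auto
    fix w assume w: "w \<in> carrier G"
    then obtain n where n: "pr w = Xq [^]\<^bsub>Qg\<^esub> (n::nat)" using allT by (auto simp: T_def)
    have xn: "x [^] n \<in> generate G {x}"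
      using generate_pow_on_finite_carrier[OF finG x] by auto
    have "inv (x [^] n) \<otimes> w \<in> frat G"
      using pr_eq_iff[of "x [^] n" w] x w n by (simp add: pr_pow Xq_def)
    moreover have "w = x [^] n \<otimes> (inv (x [^] n) \<otimes> w)" using x w by (simp add: m_assoc[symmetric])
    ultimately show "\<exists>h\<in>generate G {x}. \<exists>f\<in>frat G. w = h \<otimes> f" using xn by blast
  qed
  then show False using noncyc x by blast
qed

end

locale lin = pgrp G p for G (structure) and p +
  fixes x y
  assumes x: "x \<in> carrier G" and y: "y \<in> carrier G"
    and gen: "generate G {x, y} = carrier G"
    and noncyc: "\<not> (\<exists>z \<in> carrier G. generate G {z} = carrier G)"
begin

definition V :: "int \<Rightarrow> int \<Rightarrow> 'a set" where
  "V i j = pr x [^]\<^bsub>Qg\<^esub> nat (i mod int p) \<otimes>\<^bsub>Qg\<^esub> pr y [^]\<^bsub>Qg\<^esub> nat (j mod int p)"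

lemma Xc: "pr x \<in> carrier Qg" and Yc: "pr y \<in> carrier Qg" using x y pr_closed by auto

lemma p0: "int p > 0" using p_gt1 by simp

lemma V_closed: "V i j \<in> carrier Qg"
proof -
  interpret Q: comm_group Qg by (rule Q_comm)
  show ?thesis using Xc Yc by (simp add: V_def)
qed

lemma V_cong: "i mod int p = i' mod int p \<Longrightarrow> j mod int p = j' mod int p \<Longrightarrow> V i j = V i' j'"
  by (simp add: V_def)

lemma Vnat: "V (int a) (int b) = pr x [^]\<^bsub>Qg\<^esub> a \<otimes>\<^bsub>Qg\<^esub> pr y [^]\<^bsub>Qg\<^esub> b"
proof -
  have "nat (int a mod int p) = a mod p" "nat (int b mod int p) = b mod p"
    by (simp_all add: nat_mod_distrib)
  then show ?thesis using Q_pow_mod[OF Xc, of a] Q_pow_mod[OF Yc, of b] by (simp add: V_def)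
qed

lemma V_nat_rep: "V i j = V (int (nat (i mod int p))) (int (nat (j mod int p)))"
  using p0 by (intro V_cong) simp_all

lemma V_mult: "V i j \<otimes>\<^bsub>Qg\<^esub> V k l = V (i + k) (j + l)"
proof -
  interpret Q: comm_group Qg by (rule Q_comm)
  define a where "a = nat (i mod int p)"
  define b where "b = nat (j mod int p)"
  define c where "c = nat (k mod int p)"
  define d where "d = nat (l mod int p)"
  have "V i j \<otimes>\<^bsub>Qg\<^esub> V k l = (pr x [^]\<^bsub>Qg\<^esub> a \<otimes>\<^bsub>Qg\<^esub> pr y [^]\<^bsub>Qg\<^esub> b) \<otimes>\<^bsub>Qg\<^esub> (pr x [^]\<^bsub>Qg\<^esub> c \<otimes>\<^bsub>Qg\<^esub> pr y [^]\<^bsub>Qg\<^esub> d)"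
    by (simp add: V_def a_def b_def c_def d_def)
  also have "\<dots> = pr x [^]\<^bsub>Qg\<^esub> (a + c) \<otimes>\<^bsub>Qg\<^esub> pr y [^]\<^bsub>Qg\<^esub> (b + d)"
    using Xc Yc by (simp add: Q.nat_pow_mult[symmetric] Q.m_ac)
  also have "\<dots> = V (int (a + c)) (int (b + d))" by (rule Vnat[symmetric])
  also have "\<dots> = V (i + k) (j + l)"
    using p0 by (intro V_cong) (simp_all add: a_def b_def c_def d_def mod_add_eq)
  finally show ?thesis .
qed

lemma V_zero: "V 0 0 = \<one>\<^bsub>Qg\<^esub>"
proof -
  interpret Q: comm_group Qg by (rule Q_comm)
  show ?thesis using Xc Yc by (simp add: V_def)
qed

lemma V_pow: "V i j [^]\<^bsub>Qg\<^esub> (n::nat) = V (i * int n) (j * int n)"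
proof (induction n)
  case 0
  interpret Q: comm_group Qg by (rule Q_comm)
  show ?case by (simp add: V_zero)
next
  case (Suc n)
  interpret Q: comm_group Qg by (rule Q_comm)
  have "V i j [^]\<^bsub>Qg\<^esub> Suc n = V (i * int n) (j * int n) \<otimes>\<^bsub>Qg\<^esub> V i j" using Suc by simp
  also have "\<dots> = V (i * int (Suc n)) (j * int (Suc n))" by (simp add: V_mult algebra_simps)
  finally show ?case .
qed

lemma V_inv: "inv\<^bsub>Qg\<^esub> (V i j) = V (- i) (- j)"
proof -
  interpret Q: comm_group Qg by (rule Q_comm)
  have "V i j \<otimes>\<^bsub>Qg\<^esub> V (- i) (- j) = \<one>\<^bsub>Qg\<^esub>" by (simp add: V_mult V_zero)
  then show ?thesis using V_closed by (metis Q.inv_equality Q.m_comm)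
qed

lemma V_cover: assumes a: "a \<in> carrier G" shows "\<exists>i j. pr a = V i j"
proof -
  define T where "T = {a \<in> carrier G. \<exists>i j. pr a = V i j}"
  have sT: "subgroup T G"
  proof
    show "T \<subseteq> carrier G" by (auto simp: T_def)
    show "u \<otimes> v \<in> T" if "u \<in> T" "v \<in> T" for u v
      using that unfolding T_def by (fastforce simp: pr_mult V_mult)
    show "\<one> \<in> T" using V_zero pr_one by (auto simp: T_def)
    show "inv u \<in> T" if "u \<in> T" for u
      using that unfolding T_def by (fastforce simp: pr_inv V_inv)
  qed
  have "pr x = V 1 0" using Vnat[of 1 0] Xc
  proof -
    interpret Q: comm_group Qg by (rule Q_comm)
    show ?thesis using Vnat[of 1 0] Xc by simp
  qed
  then have "x \<in> T" using x by (auto simp: T_def)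
  moreover have "pr y = V 0 1"
  proof -
    interpret Q: comm_group Qg by (rule Q_comm)
    show ?thesis using Vnat[of 0 1] Yc by simp
  qed
  then have "y \<in> T" using y by (auto simp: T_def)
  ultimately have "generate G {x, y} \<subseteq> T" using sT by (intro generate_subgroup_incl) auto
  then show ?thesis using a gen by (auto simp: T_def)
qed

lemma V_one_iff: "V i j = \<one>\<^bsub>Qg\<^esub> \<longleftrightarrow> int p dvd i \<and> int p dvd j"
proof
  assume "int p dvd i \<and> int p dvd j"
  then have "V i j = V 0 0" by (intro V_cong) auto
  then show "V i j = \<one>\<^bsub>Qg\<^esub>" by (simp add: V_zero)
next
  interpret Q: comm_group Qg by (rule Q_comm)
  assume eq: "V i j = \<one>\<^bsub>Qg\<^esub>"
  define a where "a = nat (i mod int p)"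
  define b where "b = nat (j mod int p)"
  have e1: "pr x [^]\<^bsub>Qg\<^esub> a \<otimes>\<^bsub>Qg\<^esub> pr y [^]\<^bsub>Qg\<^esub> b = \<one>\<^bsub>Qg\<^esub>"
    using eq by (simp add: V_def a_def b_def)
  then have "p dvd b" using core[OF x y gen noncyc] by blast
  moreover have "pr y [^]\<^bsub>Qg\<^esub> b \<otimes>\<^bsub>Qg\<^esub> pr x [^]\<^bsub>Qg\<^esub> a = \<one>\<^bsub>Qg\<^esub>"
    using e1 Xc Yc by (simp add: Q.m_comm)
  then have "p dvd a" using core[OF y x _ noncyc] gen by (simp add: insert_commute)
  moreover have "a < p" "b < p" using p0 by (simp_all add: a_def b_def nat_less_iff)
  ultimately have "a = 0" "b = 0" using nat_dvd_not_less by (metis gr0I)+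
  then show "int p dvd i \<and> int p dvd j" using p0 pos_mod_sign[OF p0, of i] pos_mod_sign[OF p0, of j]
    by (auto simp: a_def b_def dvd_eq_mod_eq_0)
qed

lemma V_eq_iff: "V i j = V k l \<longleftrightarrow> i mod int p = k mod int p \<and> j mod int p = l mod int p"
proof
  assume "i mod int p = k mod int p \<and> j mod int p = l mod int p"
  then show "V i j = V k l" by (intro V_cong) auto
next
  interpret Q: comm_group Qg by (rule Q_comm)
  assume "V i j = V k l"
  then have "V i j \<otimes>\<^bsub>Qg\<^esub> V (- k) (- l) = \<one>\<^bsub>Qg\<^esub>"
    by (simp add: V_mult V_zero)
  then have "V (i - k) (j - l) = \<one>\<^bsub>Qg\<^esub>" by (simp add: V_mult)
  then have "int p dvd (i - k) \<and> int p dvd (j - l)" by (simp add: V_one_iff)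
  then show "i mod int p = k mod int p \<and> j mod int p = l mod int p"
    by (simp add: mod_eq_dvd_iff)
qed

lemma aut_pr:
  assumes s: "\<sigma> \<in> auto G" and a: "a \<in> carrier G" and b: "b \<in> carrier G" and eq: "pr a = pr b"
  shows "pr (\<sigma> a) = pr (\<sigma> b)"
proof -
  have hom: "\<sigma> \<in> hom G G" using s by (auto simp: auto_def)
  interpret h: group_hom G G \<sigma> by (unfold_locales) (rule hom)
  have "inv a \<otimes> b \<in> frat G" using eq a b by (simp add: pr_eq_iff)
  then have "\<sigma> (inv a \<otimes> b) \<in> frat G" by (rule auto_frat[OF s])
  then have "inv (\<sigma> a) \<otimes> \<sigma> b \<in> frat G" using a b by simp
  then show ?thesis using a b by (simp add: pr_eq_iff)
qed

lemma lin_act: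
  assumes s: "\<sigma> \<in> auto G" and sx: "pr (\<sigma> x) = V A B" and sy: "pr (\<sigma> y) = V C D"
    and w: "w \<in> carrier G" and pw: "pr w = V i j"
  shows "pr (\<sigma> w) = V (A * i + C * j) (B * i + D * j)"
proof -
  interpret Q: comm_group Qg by (rule Q_comm)
  have hom: "\<sigma> \<in> hom G G" using s by (auto simp: auto_def)
  interpret h: group_hom G G \<sigma> by (unfold_locales) (rule hom)
  define a where "a = nat (i mod int p)"
  define b where "b = nat (j mod int p)"
  define w' where "w' = x [^] a \<otimes> y [^] b"
  have w'c: "w' \<in> carrier G" using x y by (simp add: w'_def)
  have "pr w' = V (int a) (int b)" using x y by (simp add: w'_def pr_mult pr_pow Vnat)
  also have "\<dots> = V i j" using p0 by (intro V_cong) (simp_all add: a_def b_def)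
  finally have "pr w = pr w'" using pw by simp
  then have "pr (\<sigma> w) = pr (\<sigma> w')" by (rule aut_pr[OF s w w'c])
  also have "\<dots> = pr (\<sigma> x) [^]\<^bsub>Qg\<^esub> a \<otimes>\<^bsub>Qg\<^esub> pr (\<sigma> y) [^]\<^bsub>Qg\<^esub> b"
    using x y by (simp add: w'_def pr_mult pr_pow h.hom_nat_pow)
  also have "\<dots> = V (A * int a + C * int b) (B * int a + D * int b)"
    by (simp add: sx sy V_pow V_mult)
  also have "\<dots> = V (A * i + C * j) (B * i + D * j)"
  proof (rule V_cong)
    have ia: "int a mod int p = i mod int p" "int b mod int p = j mod int p" using p0 by (simp_all add: a_def b_def)
    show "(A * int a + C * int b) mod int p = (A * i + C * j) mod int p"
      by (rule mod_add_cong; rule mod_mult_cong) (simp_all add: ia)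
    show "(B * int a + D * int b) mod int p = (B * i + D * j) mod int p"
      by (rule mod_add_cong; rule mod_mult_cong) (simp_all add: ia)
  qed
  finally show ?thesis .
qed

end

lemma simple_nontriv:
  assumes s: "simple_group G" and N: "N \<lhd> G" and n: "n \<in> N" "n \<noteq> \<one>\<^bsub>G\<^esub>"
  shows "N = carrier G"
  using simple_group.no_real_normal_subgroup[OF s N] n by blast

lemma simple_comm:
  assumes s: "simple_group G" and nc: "\<not> comm_group G" and N: "N \<lhd> G"
    and c: "\<And>g h. g \<in> carrier G \<Longrightarrow> h \<in> carrier G \<Longrightarrow> g \<otimes>\<^bsub>G\<^esub> h \<otimes>\<^bsub>G\<^esub> inv\<^bsub>G\<^esub> g \<otimes>\<^bsub>G\<^esub> inv\<^bsub>G\<^esub> h \<in> N"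
  shows "N = carrier G"
proof -
  interpret G: group G using s by (simp add: simple_group_def)
  have "N = carrier G \<or> N = {\<one>\<^bsub>G\<^esub>}" using simple_group.no_real_normal_subgroup[OF s N] by blast
  then show ?thesis
  proof
    assume N1: "N = {\<one>\<^bsub>G\<^esub>}"
    have "comm_group G"
    proof (rule G.group_comm_groupI)
      fix g h assume g: "g \<in> carrier G" and h: "h \<in> carrier G"
      have "g \<otimes>\<^bsub>G\<^esub> h \<otimes>\<^bsub>G\<^esub> inv\<^bsub>G\<^esub> g \<otimes>\<^bsub>G\<^esub> inv\<^bsub>G\<^esub> h = \<one>\<^bsub>G\<^esub>" using c[OF g h] N1 by simp
      then have "g \<otimes>\<^bsub>G\<^esub> h \<otimes>\<^bsub>G\<^esub> inv\<^bsub>G\<^esub> (h \<otimes>\<^bsub>G\<^esub> g) = \<one>\<^bsub>G\<^esub>"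
        using g h by (simp add: G.inv_mult_group G.m_assoc)
      then show "g \<otimes>\<^bsub>G\<^esub> h = h \<otimes>\<^bsub>G\<^esub> g" using g h
        by (metis G.inv_closed G.inv_inv G.m_closed G.inv_equality G.r_inv G.inv_solve_right G.l_one)
    qed
    then show ?thesis using nc by simp
  qed
qed

lemma simple_abel_hom:
  fixes q :: int and s :: "'h \<Rightarrow> int"
  assumes sg: "simple_group G" and nc: "\<not> comm_group G"
    and opcong: "\<And>a b a' b'. a mod q = a' mod q \<Longrightarrow> b mod q = b' mod q \<Longrightarrow> op a b mod q = op a' b' mod q"
    and opcomm: "\<And>a b. op a b = op b a" and opassoc: "\<And>a b c. op (op a b) c = op a (op b c)"
    and ope: "\<And>a. op e a = a"
    and shom: "\<And>g h. g \<in> carrier G \<Longrightarrow> h \<in> carrier G \<Longrightarrow> s (g \<otimes>\<^bsub>G\<^esub> h) mod q = op (s g) (s h) mod q"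
    and s1: "s \<one>\<^bsub>G\<^esub> mod q = e mod q"
  shows "\<And>g. g \<in> carrier G \<Longrightarrow> s g mod q = e mod q"
proof -
  interpret G: group G using sg by (simp add: simple_group_def)
  define N where "N = {g \<in> carrier G. s g mod q = e mod q}"
  have invs: "op (s g) (s (inv\<^bsub>G\<^esub> g)) mod q = e mod q" if g: "g \<in> carrier G" for g
    using shom[OF g G.inv_closed[OF g]] s1 g by simp
  have cong2: "op a b mod q = op e b mod q" if "a mod q = e mod q" for a b
    using opcong[OF that, of b b] by simp
  have sN: "subgroup N G"
  proof
    show "N \<subseteq> carrier G" by (auto simp: N_def)
    show "a \<otimes>\<^bsub>G\<^esub> b \<in> N" if "a \<in> N" "b \<in> N" for a b
    proof -
      have a: "a \<in> carrier G" "s a mod q = e mod q" and b: "b \<in> carrier G" "s b mod q = e mod q"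
        using that by (auto simp: N_def)
      have "s (a \<otimes>\<^bsub>G\<^esub> b) mod q = op (s a) (s b) mod q" by (rule shom[OF a(1) b(1)])
      also have "\<dots> = op e e mod q" by (rule opcong[OF a(2) b(2)])
      finally show ?thesis using a b ope by (simp add: N_def)
    qed
    show "\<one>\<^bsub>G\<^esub> \<in> N" using s1 by (simp add: N_def)
    show "inv\<^bsub>G\<^esub> a \<in> N" if "a \<in> N" for a
    proof -
      have a: "a \<in> carrier G" "s a mod q = e mod q" using that by (auto simp: N_def)
      have "s (inv\<^bsub>G\<^esub> a) mod q = op (s a) (s (inv\<^bsub>G\<^esub> a)) mod q"
        using cong2[OF a(2)] ope by simp
      also have "\<dots> = e mod q" by (rule invs[OF a(1)])
      finally show ?thesis using a by (simp add: N_def)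
    qed
  qed
  have nN: "N \<lhd> G"
    unfolding G.normal_inv_iff
  proof (intro conjI sN ballI)
    fix k n assume k: "k \<in> carrier G" and n: "n \<in> N"
    have nc: "n \<in> carrier G" "s n mod q = e mod q" using n by (auto simp: N_def)
    have ik: "inv\<^bsub>G\<^esub> k \<in> carrier G" using k by simp
    have "s (k \<otimes>\<^bsub>G\<^esub> n \<otimes>\<^bsub>G\<^esub> inv\<^bsub>G\<^esub> k) mod q = op (s (k \<otimes>\<^bsub>G\<^esub> n)) (s (inv\<^bsub>G\<^esub> k)) mod q"
      using shom k nc ik by simp
    also have "\<dots> = op (op (s k) (s n)) (s (inv\<^bsub>G\<^esub> k)) mod q"
      by (rule opcong) (use shom[OF k nc(1)] in simp_all)
    also have "\<dots> = op (op (s n) (s k)) (s (inv\<^bsub>G\<^esub> k)) mod q" by (simp add: opcomm)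
    also have "\<dots> = op (s n) (op (s k) (s (inv\<^bsub>G\<^esub> k))) mod q" by (simp add: opassoc)
    also have "\<dots> = op e e mod q" by (rule opcong[OF nc(2) invs[OF k]])
    finally show "k \<otimes>\<^bsub>G\<^esub> n \<otimes>\<^bsub>G\<^esub> inv\<^bsub>G\<^esub> k \<in> N" using k nc ik ope by (simp add: N_def)
  qed
  have "N = carrier G"
  proof (rule simple_comm[OF sg nc nN])
    fix g h assume g: "g \<in> carrier G" and h: "h \<in> carrier G"
    have ig: "inv\<^bsub>G\<^esub> g \<in> carrier G" and ih: "inv\<^bsub>G\<^esub> h \<in> carrier G" using g h by auto
    have "s (g \<otimes>\<^bsub>G\<^esub> h \<otimes>\<^bsub>G\<^esub> inv\<^bsub>G\<^esub> g \<otimes>\<^bsub>G\<^esub> inv\<^bsub>G\<^esub> h) mod q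
          = op (s (g \<otimes>\<^bsub>G\<^esub> h \<otimes>\<^bsub>G\<^esub> inv\<^bsub>G\<^esub> g)) (s (inv\<^bsub>G\<^esub> h)) mod q"
      using shom g h ig ih by simp
    also have "\<dots> = op (op (s (g \<otimes>\<^bsub>G\<^esub> h)) (s (inv\<^bsub>G\<^esub> g))) (s (inv\<^bsub>G\<^esub> h)) mod q"
      by (rule opcong) (use shom g h ig in simp_all)
    also have "\<dots> = op (op (op (s g) (s h)) (s (inv\<^bsub>G\<^esub> g))) (s (inv\<^bsub>G\<^esub> h)) mod q"
      by (rule opcong; (rule opcong)?) (use shom g h in simp_all)
    also have "\<dots> = op (op (s g) (s (inv\<^bsub>G\<^esub> g))) (op (s h) (s (inv\<^bsub>G\<^esub> h))) mod q"
      by (metis opassoc opcomm)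
    also have "\<dots> = op e e mod q" by (rule opcong[OF invs[OF g] invs[OF h]])
    finally show "g \<otimes>\<^bsub>G\<^esub> h \<otimes>\<^bsub>G\<^esub> inv\<^bsub>G\<^esub> g \<otimes>\<^bsub>G\<^esub> inv\<^bsub>G\<^esub> h \<in> N"
      using g h ig ih ope by (simp add: N_def)
  qed
  then show "\<And>g. g \<in> carrier G \<Longrightarrow> s g mod q = e mod q" by (auto simp: N_def)
qed

locale act = pgrp P p for P (structure) and p +
  fixes G :: "('h, 'd) monoid_scheme" and \<phi> :: "'h \<Rightarrow> 'a \<Rightarrow> 'a"
  assumes grpG: "group G" and phom: "\<phi> \<in> hom G (AutoGroup P)"
begin

lemma phi_auto: "g \<in> carrier G \<Longrightarrow> \<phi> g \<in> auto P"
  using phom by (auto simp: hom_def AutoGroup_def)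

lemma phi_Bij: "g \<in> carrier G \<Longrightarrow> \<phi> g \<in> Bij (carrier P)"
  using phi_auto by (auto simp: auto_def)

lemma phi_hom: "g \<in> carrier G \<Longrightarrow> \<phi> g \<in> hom P P"
  using phi_auto by (auto simp: auto_def)

lemma phi_closed: "g \<in> carrier G \<Longrightarrow> w \<in> carrier P \<Longrightarrow> \<phi> g w \<in> carrier P"
  using phi_hom by (auto simp: hom_def)

lemma phi_mult: "g \<in> carrier G \<Longrightarrow> a \<in> carrier P \<Longrightarrow> b \<in> carrier P \<Longrightarrow> \<phi> g (a \<otimes> b) = \<phi> g a \<otimes> \<phi> g b"
  using phi_hom by (auto simp: hom_def)

lemma phi_ghom: "g \<in> carrier G \<Longrightarrow> group_hom P P (\<phi> g)"
  by (rule group_hom.intro[OF is_group is_group]) (simp add: group_hom_axioms_def phi_hom)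

lemma phi_inv: "g \<in> carrier G \<Longrightarrow> a \<in> carrier P \<Longrightarrow> \<phi> g (inv a) = inv (\<phi> g a)"
  using group_hom.hom_inv[OF phi_ghom] by blast

lemma phi_one1: "g \<in> carrier G \<Longrightarrow> \<phi> g \<one> = \<one>"
  using group_hom.hom_one[OF phi_ghom] by blast

lemma phi_pow: "g \<in> carrier G \<Longrightarrow> a \<in> carrier P \<Longrightarrow> \<phi> g (a [^] (n::nat)) = \<phi> g a [^] n"
  using group_hom.hom_nat_pow[OF phi_ghom] by blast

lemma phi_comp: assumes g: "g \<in> carrier G" and h: "h \<in> carrier G" and w: "w \<in> carrier P"
  shows "\<phi> (g \<otimes>\<^bsub>G\<^esub> h) w = \<phi> g (\<phi> h w)"
proof -
  have "\<phi> (g \<otimes>\<^bsub>G\<^esub> h) = \<phi> g \<otimes>\<^bsub>AutoGroup P\<^esub> \<phi> h" using phom g h by (auto simp: hom_def)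
  then show ?thesis using phi_Bij[OF g] phi_Bij[OF h] w
    by (simp add: AutoGroup_def BijGroup_def compose_def)
qed

lemma phi_one: assumes w: "w \<in> carrier P" shows "\<phi> \<one>\<^bsub>G\<^esub> w = w"
proof -
  interpret Au: group "AutoGroup P" by (rule AutoGroup)
  interpret h: group_hom G "AutoGroup P" \<phi>
    by (rule group_hom.intro[OF grpG AutoGroup]) (simp add: group_hom_axioms_def phom)
  have "\<phi> \<one>\<^bsub>G\<^esub> = \<one>\<^bsub>AutoGroup P\<^esub>" by simp
  then show ?thesis using w by (simp add: AutoGroup_def BijGroup_def)
qed

lemma phi_invG1: assumes g: "g \<in> carrier G" and w: "w \<in> carrier P"
  shows "\<phi> (inv\<^bsub>G\<^esub> g) (\<phi> g w) = w"
proof -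
  interpret G: group G by (rule grpG)
  show ?thesis using phi_comp[OF G.inv_closed[OF g] g w] g w phi_one by simp
qed

lemma phi_invG2: assumes g: "g \<in> carrier G" and w: "w \<in> carrier P"
  shows "\<phi> g (\<phi> (inv\<^bsub>G\<^esub> g) w) = w"
proof -
  interpret G: group G by (rule grpG)
  show ?thesis using phi_comp[OF g G.inv_closed[OF g] w] g w phi_one by simp
qed

lemma rel_normal:
  assumes pres: "\<And>g a b. g \<in> carrier G \<Longrightarrow> a \<in> carrier P \<Longrightarrow> b \<in> carrier P \<Longrightarrow> R a b \<Longrightarrow> R (\<phi> g a) (\<phi> g b)"
    and refl: "\<And>a. a \<in> carrier P \<Longrightarrow> R a a"
    and sym: "\<And>a b. R a b \<Longrightarrow> R b a"
    and trans: "\<And>a b c. R a b \<Longrightarrow> R b c \<Longrightarrow> R a c"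
  shows "{g \<in> carrier G. \<forall>w \<in> carrier P. R (\<phi> g w) w} \<lhd> G"
proof -
  interpret G: group G by (rule grpG)
  define N where "N = {g \<in> carrier G. \<forall>w \<in> carrier P. R (\<phi> g w) w}"
  have sN: "subgroup N G"
  proof
    show "N \<subseteq> carrier G" by (auto simp: N_def)
    show "a \<otimes>\<^bsub>G\<^esub> b \<in> N" if "a \<in> N" "b \<in> N" for a b
    proof -
      have a: "a \<in> carrier G" "\<forall>w \<in> carrier P. R (\<phi> a w) w" and b: "b \<in> carrier G" "\<forall>w \<in> carrier P. R (\<phi> b w) w"
        using that by (auto simp: N_def)
      have "R (\<phi> (a \<otimes>\<^bsub>G\<^esub> b) w) w" if w: "w \<in> carrier P" for w
      proof -
        have "R (\<phi> a (\<phi> b w)) (\<phi> a w)" using pres[OF a(1) phi_closed[OF b(1) w] w] b w by blast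
        then have "R (\<phi> a (\<phi> b w)) w" using trans a w by blast
        then show ?thesis using phi_comp[OF a(1) b(1) w] by simp
      qed
      then show ?thesis using a b by (auto simp: N_def)
    qed
    show "\<one>\<^bsub>G\<^esub> \<in> N" using refl phi_one by (auto simp: N_def)
    show "inv\<^bsub>G\<^esub> a \<in> N" if "a \<in> N" for a
    proof -
      have a: "a \<in> carrier G" "\<forall>w \<in> carrier P. R (\<phi> a w) w" using that by (auto simp: N_def)
      have "R (\<phi> (inv\<^bsub>G\<^esub> a) w) w" if w: "w \<in> carrier P" for w
      proof -
        have u: "\<phi> (inv\<^bsub>G\<^esub> a) w \<in> carrier P" using phi_closed a w by simp
        have "R (\<phi> a (\<phi> (inv\<^bsub>G\<^esub> a) w)) (\<phi> (inv\<^bsub>G\<^esub> a) w)" using a u by blast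
        then show ?thesis using phi_invG2[OF a(1) w] sym by simp
      qed
      then show ?thesis using a by (auto simp: N_def)
    qed
  qed
  have "k \<otimes>\<^bsub>G\<^esub> n \<otimes>\<^bsub>G\<^esub> inv\<^bsub>G\<^esub> k \<in> N" if k: "k \<in> carrier G" and n: "n \<in> N" for k n
  proof -
    have n': "n \<in> carrier G" "\<forall>w \<in> carrier P. R (\<phi> n w) w" using n by (auto simp: N_def)
    have ik: "inv\<^bsub>G\<^esub> k \<in> carrier G" using k by simp
    have "R (\<phi> (k \<otimes>\<^bsub>G\<^esub> n \<otimes>\<^bsub>G\<^esub> inv\<^bsub>G\<^esub> k) w) w" if w: "w \<in> carrier P" for w
    proof -
      define u where "u = \<phi> (inv\<^bsub>G\<^esub> k) w"
      have u: "u \<in> carrier P" using phi_closed ik w by (simp add: u_def)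
      have "R (\<phi> k (\<phi> n u)) (\<phi> k u)" using pres[OF k phi_closed[OF n'(1) u] u] n' u by blast
      moreover have "\<phi> k u = w" using phi_invG2[OF k w] by (simp add: u_def)
      moreover have "\<phi> (k \<otimes>\<^bsub>G\<^esub> n \<otimes>\<^bsub>G\<^esub> inv\<^bsub>G\<^esub> k) w = \<phi> k (\<phi> n u)"
        using k n'(1) ik w by (simp add: phi_comp phi_closed u_def)
      ultimately show ?thesis by simp
    qed
    then show ?thesis using k n' ik by (auto simp: N_def)
  qed
  then show ?thesis using sN unfolding N_def G.normal_inv_iff by blast
qed

definition Ker where "Ker = {g \<in> carrier G. \<forall>w \<in> carrier P. \<phi> g w = w}"

lemma Ker_normal: "Ker \<lhd> G"
  unfolding Ker_def by (rule rel_normal) auto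

lemma cyclic_case:
  assumes sg: "simple_group G" and nc: "\<not> comm_group G"
    and z: "z \<in> carrier P" and gz: "generate P {z} = carrier P"
  shows "Ker = carrier G"
proof (rule simple_comm[OF sg nc Ker_normal])
  interpret G: group G by (rule grpG)
  have pw: "generate P {z} = {z [^] k | k. k \<in> (UNIV :: nat set)}"
    by (rule generate_pow_on_finite_carrier[OF finG z])
  have rep: "\<exists>k::nat. w = z [^] k" if "w \<in> carrier P" for w using that gz pw by auto
  have commute: "\<phi> g (\<phi> h w) = \<phi> h (\<phi> g w)" if g: "g \<in> carrier G" and h: "h \<in> carrier G" and w: "w \<in> carrier P" for g h w
  proof -
    obtain a :: nat where a: "\<phi> g z = z [^] a" using rep phi_closed[OF g z] by blast
    obtain b :: nat where b: "\<phi> h z = z [^] b" using rep phi_closed[OF h z] by blast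
    obtain k :: nat where k: "w = z [^] k" using rep w by blast
    have "\<phi> g (\<phi> h w) = z [^] (a * b * k)"
      using g h z by (simp add: k phi_pow a b nat_pow_pow mult.commute mult.left_commute)
    moreover have "\<phi> h (\<phi> g w) = z [^] (a * b * k)"
      using g h z by (simp add: k phi_pow a b nat_pow_pow mult.commute mult.left_commute)
    ultimately show ?thesis by simp
  qed
  fix g h assume g: "g \<in> carrier G" and h: "h \<in> carrier G"
  have ig: "inv\<^bsub>G\<^esub> g \<in> carrier G" and ih: "inv\<^bsub>G\<^esub> h \<in> carrier G" using g h by auto
  have "\<phi> (g \<otimes>\<^bsub>G\<^esub> h \<otimes>\<^bsub>G\<^esub> inv\<^bsub>G\<^esub> g \<otimes>\<^bsub>G\<^esub> inv\<^bsub>G\<^esub> h) w = w" if w: "w \<in> carrier P" for w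
  proof -
    have w1: "\<phi> (inv\<^bsub>G\<^esub> h) w \<in> carrier P" using phi_closed ih w by simp
    have "\<phi> (g \<otimes>\<^bsub>G\<^esub> h \<otimes>\<^bsub>G\<^esub> inv\<^bsub>G\<^esub> g \<otimes>\<^bsub>G\<^esub> inv\<^bsub>G\<^esub> h) w = \<phi> g (\<phi> h (\<phi> (inv\<^bsub>G\<^esub> g) (\<phi> (inv\<^bsub>G\<^esub> h) w)))"
      using g h ig ih w by (simp add: phi_comp phi_closed)
    also have "\<dots> = \<phi> g (\<phi> (inv\<^bsub>G\<^esub> g) (\<phi> h (\<phi> (inv\<^bsub>G\<^esub> h) w)))"
      using commute[OF h ig w1] by simp
    also have "\<dots> = w" using g h w phi_invG2 phi_closed ih by simp
    finally show ?thesis .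
  qed
  then show "g \<otimes>\<^bsub>G\<^esub> h \<otimes>\<^bsub>G\<^esub> inv\<^bsub>G\<^esub> g \<otimes>\<^bsub>G\<^esub> inv\<^bsub>G\<^esub> h \<in> Ker" using g h ig ih by (simp add: Ker_def)
qed

end

context act begin

lemma phi_pr:
  assumes g: "g \<in> carrier G" and a: "a \<in> carrier P" and b: "b \<in> carrier P" and eq: "pr a = pr b"
  shows "pr (\<phi> g a) = pr (\<phi> g b)"
proof -
  interpret h: group_hom P P "\<phi> g" by (rule phi_ghom[OF g])
  have "inv a \<otimes> b \<in> frat P" using eq a b by (simp add: pr_eq_iff)
  then have "\<phi> g (inv a \<otimes> b) \<in> frat P" by (rule auto_frat[OF phi_auto[OF g]])
  then have "inv (\<phi> g a) \<otimes> \<phi> g b \<in> frat P" using a b by simp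
  then show ?thesis using a b g phi_closed by (simp add: pr_eq_iff)
qed

definition N0 where "N0 = {g \<in> carrier G. \<forall>w \<in> carrier P. pr (\<phi> g w) = pr w}"

lemma N0_normal: "N0 \<lhd> G"
  unfolding N0_def
proof (rule rel_normal[where R="\<lambda>a b. pr a = pr b"])
  show "\<And>g a b. g \<in> carrier G \<Longrightarrow> a \<in> carrier P \<Longrightarrow> b \<in> carrier P \<Longrightarrow> pr a = pr b \<Longrightarrow> pr (\<phi> g a) = pr (\<phi> g b)"
    by (rule phi_pr)
qed simp_all

lemma claimC:
  assumes q: "Factorial_Ring.prime (q::nat)" and qp: "q \<noteq> p"
    and r: "r \<in> carrier G" and rq: "r [^]\<^bsub>G\<^esub> q = \<one>\<^bsub>G\<^esub>" and rN: "r \<in> N0"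
  shows "\<forall>w \<in> carrier P. \<phi> r w = w"
proof (cases "r = \<one>\<^bsub>G\<^esub>")
  case True
  then show ?thesis using phi_one by simp
next
  case False
  interpret G: group G by (rule grpG)
  define H where "H = G\<lparr>carrier := generate G {r}\<rparr>"
  have sgen: "subgroup (generate G {r}) G" using r by (intro G.generate_is_subgroup) auto
  have gH: "group H" unfolding H_def by (rule subgroup.subgroup_is_group[OF sgen grpG])
  have "G.ord r dvd q" using G.pow_eq_id[OF r] rq by simp
  moreover have "G.ord r \<noteq> 1" using G.ord_eq_1[OF r] False by simp
  ultimately have ordr: "G.ord r = q" using q prime_nat_iff by blast
  have ordH: "order H = q ^ 1" using G.generate_pow_card[OF r] ordr by (simp add: H_def order_def)
  have genN0: "generate G {r} \<subseteq> N0"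
    using rN normal_imp_subgroup[OF N0_normal] by (intro G.generate_subgroup_incl) auto
  have sF: "subgroup (frat P) P" by (rule normal_imp_subgroup[OF frat_normal])
  obtain k where k: "card (frat P) = p ^ k" using sub_ppow[OF sF] by blast
  have fixpt: "\<exists>c \<in> carrier P. pr c = pr w \<and> \<phi> r c = c" if w: "w \<in> carrier P" for w
  proof -
    define S where "S = {c \<in> carrier P. pr c = pr w}"
    have finS: "finite S" using finG by (simp add: S_def)
    have cl: "\<phi> h c \<in> S" if "h \<in> carrier H" "c \<in> S" for h c
    proof -
      have h: "h \<in> N0" using that genN0 by (auto simp: H_def)
      then show ?thesis using that by (auto simp: S_def N0_def phi_closed)
    qed
    have one: "\<phi> \<one>\<^bsub>H\<^esub> c = c" if "c \<in> S" for c using that phi_one by (simp add: H_def S_def)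
    have mul: "\<phi> (g \<otimes>\<^bsub>H\<^esub> h) c = \<phi> g (\<phi> h c)" if "g \<in> carrier H" "h \<in> carrier H" "c \<in> S" for g h c
      using that sgen subgroup.subset by (auto simp: H_def S_def intro!: phi_comp)
    have dv: "q dvd card (S - {c \<in> S. \<forall>h \<in> carrier H. \<phi> h c = c})"
      by (rule fix_count[OF gH q ordH finS cl one mul])
    have cS: "card S = card (frat P)"
    proof -
      have "bij_betw (\<lambda>f. w \<otimes> f) (frat P) S"
      proof (rule bij_betwI[where g="\<lambda>c. inv w \<otimes> c"])
        show "(\<lambda>f. w \<otimes> f) \<in> frat P \<rightarrow> S"
        proof
          fix f assume f: "f \<in> frat P"
          then have fc: "f \<in> carrier P" using frat_sub by auto
          interpret Q: group Qg by (rule Q_group)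
          have "pr f = \<one>\<^bsub>Qg\<^esub>" using f fc by (simp add: pr_one_iff)
          then have "pr (w \<otimes> f) = pr w" using w fc pr_closed by (simp add: pr_mult)
          then show "w \<otimes> f \<in> S" using fc w by (simp add: S_def)
        qed
        show "(\<lambda>c. inv w \<otimes> c) \<in> S \<rightarrow> frat P"
        proof
          fix c assume "c \<in> S"
          then have c: "c \<in> carrier P" "pr w = pr c" by (auto simp: S_def)
          then show "inv w \<otimes> c \<in> frat P" using pr_eq_iff[OF w c(1)] by simp
        qed
        show "inv w \<otimes> (w \<otimes> f) = f" if "f \<in> frat P" for f using that w frat_sub by (auto simp: m_assoc[symmetric])
        show "w \<otimes> (inv w \<otimes> c) = c" if "c \<in> S" for c using that w by (auto simp: S_def m_assoc[symmetric])
      qed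
      then show ?thesis by (simp add: bij_betw_same_card)
    qed
    show ?thesis
    proof (rule ccontr)
      assume "\<not> ?thesis"
      then have E: "{c \<in> S. \<forall>h \<in> carrier H. \<phi> h c = c} = {}"
        using r by (auto simp: S_def H_def generate.incl)
      have "q dvd card S" using dv unfolding E by simp
      then have "q dvd p ^ k" using cS k by simp
      then have "q dvd p" using q prime_dvd_power_nat by blast
      then have "q = 1 \<or> q = p" using p_prime prime_nat_iff by blast
      then show False using q qp by auto
    qed
  qed
  define Fx where "Fx = {c \<in> carrier P. \<phi> r c = c}"
  have sFx: "subgroup Fx P"
  proof
    show "Fx \<subseteq> carrier P" by (auto simp: Fx_def)
    show "a \<otimes> b \<in> Fx" if "a \<in> Fx" "b \<in> Fx" for a b using that r by (auto simp: Fx_def phi_mult)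
    show "\<one> \<in> Fx" using r by (simp add: Fx_def phi_one1)
    show "inv a \<in> Fx" if "a \<in> Fx" for a using that r by (auto simp: Fx_def phi_inv)
  qed
  have "Fx = carrier P"
  proof (rule nongen[OF sFx])
    fix w assume w: "w \<in> carrier P"
    obtain c where c: "c \<in> carrier P" "pr c = pr w" "\<phi> r c = c" using fixpt[OF w] by blast
    have "inv c \<otimes> w \<in> frat P" using c w by (simp add: pr_eq_iff)
    moreover have "w = c \<otimes> (inv c \<otimes> w)" using c w by (simp add: m_assoc[symmetric])
    moreover have "c \<in> Fx" using c by (simp add: Fx_def)
    ultimately show "\<exists>h\<in>Fx. \<exists>f\<in>frat P. w = h \<otimes> f" by blast
  qed
  then show ?thesis by (auto simp: Fx_def)
qed

end

type_synonym m4 = "int \<times> int \<times> int \<times> int"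

fun mm :: "m4 \<Rightarrow> m4 \<Rightarrow> m4" where
  "mm (a, b, c, d) (a2, b2, c2, d2) = (a * a2 + c * b2, b * a2 + d * b2, a * c2 + c * d2, b * c2 + d * d2)"

fun meq :: "int \<Rightarrow> m4 \<Rightarrow> m4 \<Rightarrow> bool" where
  "meq q (a, b, c, d) (a2, b2, c2, d2) =
     (a mod q = a2 mod q \<and> b mod q = b2 mod q \<and> c mod q = c2 mod q \<and> d mod q = d2 mod q)"

fun det4 :: "m4 \<Rightarrow> int" where
  "det4 (a, b, c, d) = a * d - c * b"

fun sg4 :: "m4 \<Rightarrow> int" where
  "sg4 (a, b, c, d) = b + c + b * c * (a + d + 1)"

definition I4 :: m4 where "I4 = (1, 0, 0, 1)"

lemma meq_refl: "meq q M M" by (cases M) auto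
lemma meq_sym: "meq q M N \<Longrightarrow> meq q N M" by (cases M; cases N) auto
lemma meq_trans: "meq q M N \<Longrightarrow> meq q N K \<Longrightarrow> meq q M K" by (cases M; cases N; cases K) auto

lemma mod_pp: fixes a b c d :: int
  assumes "a mod q = a2 mod q" "b mod q = b2 mod q" "c mod q = c2 mod q" "d mod q = d2 mod q"
  shows "(a * b + c * d) mod q = (a2 * b2 + c2 * d2) mod q"
  by (rule mod_add_cong; rule mod_mult_cong) (use assms in auto)

lemma mod_mm: fixes a b c d :: int
  assumes "a mod q = a2 mod q" "b mod q = b2 mod q" "c mod q = c2 mod q" "d mod q = d2 mod q"
  shows "(a * b - c * d) mod q = (a2 * b2 - c2 * d2) mod q"
  by (rule mod_diff_cong; rule mod_mult_cong) (use assms in auto)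

lemma mm_cong: assumes "meq q M M2" "meq q N N2" shows "meq q (mm M N) (mm M2 N2)"
proof -
  obtain a b c d where M: "M = (a, b, c, d)" by (cases M) auto
  obtain a2 b2 c2 d2 where M2: "M2 = (a2, b2, c2, d2)" by (cases M2) auto
  obtain e f g h where N: "N = (e, f, g, h)" by (cases N) auto
  obtain e2 f2 g2 h2 where N2: "N2 = (e2, f2, g2, h2)" by (cases N2) auto
  have e: "a mod q = a2 mod q" "b mod q = b2 mod q" "c mod q = c2 mod q" "d mod q = d2 mod q"
    "e mod q = e2 mod q" "f mod q = f2 mod q" "g mod q = g2 mod q" "h mod q = h2 mod q"
    using assms unfolding M M2 N N2 by auto
  show ?thesis unfolding M M2 N N2 mm.simps meq.simps
    by (intro conjI mod_pp) (simp_all only: e)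
qed

lemma mm_assoc: "mm (mm M N) K = mm M (mm N K)"
  by (cases M; cases N; cases K) (simp add: algebra_simps)

lemma mm_I: "mm I4 M = M" "mm M I4 = M"
  by (cases M; simp add: I4_def)+

lemma det_mm: "det4 (mm M N) = det4 M * det4 N"
  by (cases M; cases N) (simp add: algebra_simps)

lemma det_cong: assumes "meq q M M2" shows "det4 M mod q = det4 M2 mod q"
proof -
  obtain a b c d where M: "M = (a, b, c, d)" by (cases M) auto
  obtain a2 b2 c2 d2 where M2: "M2 = (a2, b2, c2, d2)" by (cases M2) auto
  have e: "a mod q = a2 mod q" "b mod q = b2 mod q" "c mod q = c2 mod q" "d mod q = d2 mod q"
    using assms unfolding M M2 by auto
  show ?thesis unfolding M M2 det4.simps by (intro mod_mm) (simp_all only: e)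
qed

lemma sg_cong: assumes "meq q M M2" shows "sg4 M mod q = sg4 M2 mod q"
proof -
  obtain a b c d where M: "M = (a, b, c, d)" by (cases M) auto
  obtain a2 b2 c2 d2 where M2: "M2 = (a2, b2, c2, d2)" by (cases M2) auto
  have e: "a mod q = a2 mod q" "b mod q = b2 mod q" "c mod q = c2 mod q" "d mod q = d2 mod q"
    using assms unfolding M M2 by auto
  have "(a + d + 1) mod q = (a2 + d2 + 1) mod q" using e by (intro mod_add_cong) auto
  then have "(b * c * (a + d + 1)) mod q = (b2 * c2 * (a2 + d2 + 1)) mod q"
    using e by (intro mod_mult_cong) auto
  then have "(b + c + b * c * (a + d + 1)) mod q = (b2 + c2 + b2 * c2 * (a2 + d2 + 1)) mod q"
    using e by (intro mod_add_cong) auto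
  then show ?thesis unfolding M M2 by simp
qed

lemma mod_2_iff: "(x::int) mod 2 = y mod 2 \<longleftrightarrow> (even x \<longleftrightarrow> even y)"
  by (metis odd_iff_mod_2_eq_one even_iff_mod_2_eq_zero)

lemma sg_hom:
  assumes "odd (det4 M)" "odd (det4 N)"
  shows "sg4 (mm M N) mod 2 = (sg4 M + sg4 N) mod 2"
proof -
  obtain a b c d where M: "M = (a, b, c, d)" by (cases M) auto
  obtain e f g h where N: "N = (e, f, g, h)" by (cases N) auto
  show ?thesis using assms unfolding M N mod_2_iff det4.simps sg4.simps mm.simps
    apply (simp only: even_add even_diff even_mult_iff)
    by (cases "even a"; cases "even b"; cases "even c"; cases "even d";
        cases "even e"; cases "even f"; cases "even g"; cases "even h"; simp)
qed

lemma a3_comm: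
  assumes "even (sg4 M)" "odd (det4 M)" "even (sg4 N)" "odd (det4 N)"
  shows "meq 2 (mm M N) (mm N M)"
proof -
  obtain a b c d where M: "M = (a, b, c, d)" by (cases M) auto
  obtain e f g h where N: "N = (e, f, g, h)" by (cases N) auto
  show ?thesis using assms unfolding M N mod_2_iff det4.simps sg4.simps mm.simps meq.simps
    apply (simp only: even_add even_diff even_mult_iff)
    by (cases "even a"; cases "even b"; cases "even c"; cases "even d";
        cases "even e"; cases "even f"; cases "even g"; cases "even h"; simp)
qed


lemma invol:
  fixes q :: int
  assumes q: "Factorial_Ring.prime q" and q2: "q \<noteq> 2"
    and sq: "meq q (mm M M) I4" and dt: "det4 M mod q = 1 mod q"
  shows "meq q M I4 \<or> meq q M (-1, 0, 0, -1)"
proof -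
  obtain a b c d where M: "M = (a, b, c, d)" by (cases M) auto
  have h1: "q dvd a * a + c * b - 1" and h2: "q dvd b * (a+d)" and h3: "q dvd c * (a+d)" and h4: "q dvd b * c + d * d - 1"
    using sq unfolding M I4_def by (auto simp: mod_eq_dvd_iff algebra_simps)
  have h5: "q dvd a * d - c * b - 1" using dt unfolding M by (simp add: mod_eq_dvd_iff)
  have s1: "q dvd a * (a+d) - 2"
  proof -
    have eq: "a * (a+d) - 2 = (a * a + c * b - 1) + (a * d - c * b - 1)" by (simp add: algebra_simps)
    show ?thesis unfolding eq using h1 h5 by (rule dvd_add)
  qed
  have s2: "q dvd d * (a+d) - 2"
  proof -
    have eq: "d * (a+d) - 2 = (b * c + d * d - 1) + (a * d - c * b - 1)" by (simp add: algebra_simps)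
    show ?thesis unfolding eq using h4 h5 by (rule dvd_add)
  qed
  have q2': "q \<ge> 2" using q by (simp add: prime_ge_2_int)
  have nd: "\<not> q dvd (a + d)"
  proof
    assume "q dvd a + d"
    then have "q dvd a * (a+d)" by simp
    then have "q dvd a * (a+d) - (a * (a+d) - 2)" using s1 by (rule dvd_diff)
    then have "q dvd 2" by simp
    then have "q \<le> 2" by (simp add: zdvd_imp_le)
    then show False using q2 q2' by simp
  qed
  have bq: "q dvd b" using h2 nd q by (simp add: prime_dvd_mult_iff)
  have cq: "q dvd c" using h3 nd q by (simp add: prime_dvd_mult_iff)
  have "q dvd (a - d) * (a + d)"
  proof -
    have eq: "(a - d) * (a + d) = (a * (a+d) - 2) - (d * (a+d) - 2)" by (simp add: algebra_simps)
    show ?thesis unfolding eq using s1 s2 by (rule dvd_diff)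
  qed
  then have ad: "q dvd a - d" using nd q by (simp add: prime_dvd_mult_iff)
  have "q dvd (a - 1) * (a + 1)"
  proof -
    have eq: "(a - 1) * (a + 1) = (a * a + c * b - 1) - c * b" by (simp add: algebra_simps)
    have "q dvd c * b" using cq by simp
    then show ?thesis unfolding eq using h1 dvd_diff by blast
  qed
  then have "q dvd a - 1 \<or> q dvd a + 1" using q by (simp add: prime_dvd_mult_iff)
  then show ?thesis
  proof
    assume a1: "q dvd a - 1"
    have "d - 1 = (a - 1) - (a - d)" by simp
    then have "q dvd d - 1" using a1 ad by (metis dvd_diff)
    then show ?thesis using a1 bq cq unfolding M I4_def by (simp add: mod_eq_dvd_iff dvd_eq_mod_eq_0[symmetric])
  next
    assume a1: "q dvd a + 1"
    have "d + 1 = (a + 1) - (a - d)" by simp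
    then have "q dvd d + 1" using a1 ad by (metis dvd_diff)
    then show ?thesis using a1 bq cq unfolding M by (simp add: mod_eq_dvd_iff dvd_eq_mod_eq_0[symmetric])
  qed
qed

context lin begin

lemma prx: "pr x = V 1 0"
proof -
  interpret Q: comm_group Qg by (rule Q_comm)
  show ?thesis using Vnat[of 1 0] Xc by simp
qed

lemma pry: "pr y = V 0 1"
proof -
  interpret Q: comm_group Qg by (rule Q_comm)
  show ?thesis using Vnat[of 0 1] Yc by simp
qed

end

locale act_lin = act P p G \<phi> + lin P p x y
  for P :: "('a, 'b) monoid_scheme" (structure) and p G \<phi> x y
begin

definition coef :: "'c \<Rightarrow> m4" where
  "coef g = (SOME M. pr (\<phi> g x) = V (fst M) (fst (snd M)) \<and>
                     pr (\<phi> g y) = V (fst (snd (snd M))) (snd (snd (snd M))))"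

lemma coef_prop:
  assumes g: "g \<in> carrier G" and c: "coef g = (A, B, C, D)"
  shows "pr (\<phi> g x) = V A B \<and> pr (\<phi> g y) = V C D"
proof -
  obtain A' B' where 1: "pr (\<phi> g x) = V A' B'" using V_cover phi_closed[OF g x] by blast
  obtain C' D' where 2: "pr (\<phi> g y) = V C' D'" using V_cover phi_closed[OF g y] by blast
  have "\<exists>M. pr (\<phi> g x) = V (fst M) (fst (snd M)) \<and> pr (\<phi> g y) = V (fst (snd (snd M))) (snd (snd (snd M)))"
    using 1 2 by (intro exI[of _ "(A', B', C', D')"]) simp
  then have "pr (\<phi> g x) = V (fst (coef g)) (fst (snd (coef g))) \<and>
             pr (\<phi> g y) = V (fst (snd (snd (coef g)))) (snd (snd (snd (coef g))))"
    unfolding coef_def by (rule someI_ex)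
  then show ?thesis using c by simp
qed

lemma coef_act:
  assumes g: "g \<in> carrier G" and c: "coef g = (A, B, C, D)" and w: "w \<in> carrier P" and pw: "pr w = V i j"
  shows "pr (\<phi> g w) = V (A * i + C * j) (B * i + D * j)"
  using coef_prop[OF g c] lin_act[OF phi_auto[OF g] _ _ w pw] by blast

lemma coef_comp:
  assumes g: "g \<in> carrier G" and h: "h \<in> carrier G"
  shows "meq (int p) (coef (g \<otimes>\<^bsub>G\<^esub> h)) (mm (coef g) (coef h))"
proof -
  interpret G: group G by (rule grpG)
  obtain A B C D where cg: "coef g = (A, B, C, D)" by (cases "coef g") auto
  obtain A1 B1 C1 D1 where ch: "coef h = (A1, B1, C1, D1)" by (cases "coef h") auto
  obtain A2 B2 C2 D2 where cgh: "coef (g \<otimes>\<^bsub>G\<^esub> h) = (A2, B2, C2, D2)" by (cases "coef (g \<otimes>\<^bsub>G\<^esub> h)") auto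
  have hx: "pr (\<phi> h x) = V A1 B1" and hy: "pr (\<phi> h y) = V C1 D1" using coef_prop[OF h ch] by auto
  have ghx: "pr (\<phi> (g \<otimes>\<^bsub>G\<^esub> h) x) = V A2 B2" and ghy: "pr (\<phi> (g \<otimes>\<^bsub>G\<^esub> h) y) = V C2 D2"
    using coef_prop[OF G.m_closed[OF g h] cgh] by auto
  have "pr (\<phi> (g \<otimes>\<^bsub>G\<^esub> h) x) = V (A * A1 + C * B1) (B * A1 + D * B1)"
    using phi_comp[OF g h x] coef_act[OF g cg phi_closed[OF h x] hx] by simp
  then have ex: "A2 mod int p = (A * A1 + C * B1) mod int p \<and> B2 mod int p = (B * A1 + D * B1) mod int p"
    using ghx by (simp add: V_eq_iff)
  have "pr (\<phi> (g \<otimes>\<^bsub>G\<^esub> h) y) = V (A * C1 + C * D1) (B * C1 + D * D1)"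
    using phi_comp[OF g h y] coef_act[OF g cg phi_closed[OF h y] hy] by simp
  then have ey: "C2 mod int p = (A * C1 + C * D1) mod int p \<and> D2 mod int p = (B * C1 + D * D1) mod int p"
    using ghy by (simp add: V_eq_iff)
  show ?thesis using ex ey by (simp add: cg ch cgh)
qed

lemma coef_one: "meq (int p) (coef \<one>\<^bsub>G\<^esub>) I4"
proof -
  interpret G: group G by (rule grpG)
  obtain A B C D where c: "coef \<one>\<^bsub>G\<^esub> = (A, B, C, D)" by (cases "coef \<one>\<^bsub>G\<^esub>") auto
  have "pr x = V A B" "pr y = V C D" using coef_prop[OF G.one_closed c] phi_one x y by auto
  then have "V 1 0 = V A B" "V 0 1 = V C D" using prx pry by auto
  then show ?thesis using c by (simp add: V_eq_iff I4_def)
qed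

lemma N0_iff:
  assumes g: "g \<in> carrier G"
  shows "g \<in> N0 \<longleftrightarrow> meq (int p) (coef g) I4"
proof -
  obtain A B C D where c: "coef g = (A, B, C, D)" by (cases "coef g") auto
  show ?thesis
  proof
    assume "g \<in> N0"
    then have "pr (\<phi> g x) = pr x" "pr (\<phi> g y) = pr y" using x y by (auto simp: N0_def)
    then have "V A B = V 1 0" "V C D = V 0 1" using coef_prop[OF g c] prx pry by auto
    then show "meq (int p) (coef g) I4" using c by (simp add: V_eq_iff I4_def)
  next
    assume m: "meq (int p) (coef g) I4"
    have "pr (\<phi> g w) = pr w" if w: "w \<in> carrier P" for w
    proof -
      obtain i j where ij: "pr w = V i j" using V_cover[OF w] by blast
      have "pr (\<phi> g w) = V (A * i + C * j) (B * i + D * j)" by (rule coef_act[OF g c w ij])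
      also have "\<dots> = V (1 * i + 0 * j) (0 * i + 1 * j)"
        using m c by (intro V_cong mod_pp) (auto simp: I4_def)
      finally show ?thesis using ij by simp
    qed
    then show "g \<in> N0" using g by (simp add: N0_def)
  qed
qed

lemma negI:
  assumes g: "g \<in> carrier G" and m: "meq (int p) (coef g) (-1, 0, 0, -1)" and w: "w \<in> carrier P"
  shows "pr (\<phi> g w) = inv\<^bsub>Qg\<^esub> (pr w)"
proof -
  obtain A B C D where c: "coef g = (A, B, C, D)" by (cases "coef g") auto
  obtain i j where ij: "pr w = V i j" using V_cover[OF w] by blast
  have "pr (\<phi> g w) = V (A * i + C * j) (B * i + D * j)" by (rule coef_act[OF g c w ij])
  also have "\<dots> = V ((-1) * i + 0 * j) (0 * i + (-1) * j)"
    using m c by (intro V_cong mod_pp) auto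
  also have "\<dots> = inv\<^bsub>Qg\<^esub> (pr w)" using ij by (simp add: V_inv)
  finally show ?thesis .
qed

end

context act_lin begin

lemma pint: "Factorial_Ring.prime (int p)" using p_prime by simp

lemma coef_inv:
  assumes g: "g \<in> carrier G"
  shows "meq (int p) (mm (coef g) (coef (inv\<^bsub>G\<^esub> g))) I4"
proof -
  interpret G: group G by (rule grpG)
  have "meq (int p) (mm (coef g) (coef (inv\<^bsub>G\<^esub> g))) (coef (g \<otimes>\<^bsub>G\<^esub> inv\<^bsub>G\<^esub> g))"
    using coef_comp[OF g G.inv_closed[OF g]] by (rule meq_sym)
  then show ?thesis using coef_one g by (auto intro: meq_trans)
qed

lemma N0_all:
  assumes sg: "simple_group G" and nc: "\<not> comm_group G"
    and t: "t \<in> carrier G" "t \<noteq> \<one>\<^bsub>G\<^esub>" "t \<otimes>\<^bsub>G\<^esub> t = \<one>\<^bsub>G\<^esub>"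
  shows "N0 = carrier G"
proof -
  interpret G: group G by (rule grpG)
  have detm: "det4 (coef (g \<otimes>\<^bsub>G\<^esub> h)) mod int p = (det4 (coef g) * det4 (coef h)) mod int p"
    if g: "g \<in> carrier G" and h: "h \<in> carrier G" for g h
    using det_cong[OF coef_comp[OF g h]] by (simp add: det_mm)
  have det1: "det4 (coef \<one>\<^bsub>G\<^esub>) mod int p = 1 mod int p"
    using det_cong[OF coef_one] by (simp add: I4_def)
  show ?thesis
  proof (cases "p = 2")
    case False
    have alldet: "det4 (coef g) mod int p = 1 mod int p" if g: "g \<in> carrier G" for g
    proof (rule simple_abel_hom[OF sg nc, where op="(*)" and e=1 and q="int p" and s="\<lambda>g. det4 (coef g)"])
      show "\<And>a b a2 b2. a mod int p = a2 mod int p \<Longrightarrow> b mod int p = b2 mod int p \<Longrightarrow> a * b mod int p = a2 * b2 mod int p"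
        by (rule mod_mult_cong)
      show "\<And>g h. g \<in> carrier G \<Longrightarrow> h \<in> carrier G \<Longrightarrow> det4 (coef (g \<otimes>\<^bsub>G\<^esub> h)) mod int p = det4 (coef g) * det4 (coef h) mod int p"
        by (rule detm)
    qed (simp_all add: det1 g)
    have "meq (int p) (coef (t \<otimes>\<^bsub>G\<^esub> t)) (mm (coef t) (coef t))" by (rule coef_comp[OF t(1) t(1)])
    then have "meq (int p) (mm (coef t) (coef t)) I4" using t(3) coef_one by (auto intro: meq_trans meq_sym)
    then have "meq (int p) (coef t) I4 \<or> meq (int p) (coef t) (-1, 0, 0, -1)"
      using invol[OF pint _ _ alldet[OF t(1)]] False by simp
    then show ?thesis
    proof
      assume "meq (int p) (coef t) I4"
      then have "t \<in> N0" using N0_iff[OF t(1)] by simp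
      then show ?thesis using simple_nontriv[OF sg N0_normal] t by blast
    next
      assume tn: "meq (int p) (coef t) (-1, 0, 0, -1)"
      have it: "inv\<^bsub>G\<^esub> t = t" using G.inv_equality[OF t(3) t(1) t(1)] .
      have C: "t \<otimes>\<^bsub>G\<^esub> g \<otimes>\<^bsub>G\<^esub> inv\<^bsub>G\<^esub> t \<otimes>\<^bsub>G\<^esub> inv\<^bsub>G\<^esub> g \<in> N0" if g: "g \<in> carrier G" for g
      proof -
        interpret Q: comm_group Qg by (rule Q_comm)
        have ig: "inv\<^bsub>G\<^esub> g \<in> carrier G" using g by simp
        have "pr (\<phi> (t \<otimes>\<^bsub>G\<^esub> g \<otimes>\<^bsub>G\<^esub> inv\<^bsub>G\<^esub> t \<otimes>\<^bsub>G\<^esub> inv\<^bsub>G\<^esub> g) w) = pr w" if w: "w \<in> carrier P" for w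
        proof -
          define u where "u = \<phi> (inv\<^bsub>G\<^esub> g) w"
          have u: "u \<in> carrier P" using phi_closed[OF ig w] by (simp add: u_def)
          have gu: "\<phi> g u = w" using phi_invG2[OF g w] by (simp add: u_def)
          have e1: "\<phi> (t \<otimes>\<^bsub>G\<^esub> g \<otimes>\<^bsub>G\<^esub> inv\<^bsub>G\<^esub> t \<otimes>\<^bsub>G\<^esub> inv\<^bsub>G\<^esub> g) w = \<phi> t (\<phi> g (\<phi> t u))"
            using t g ig w it by (simp add: phi_comp phi_closed u_def)
          have "pr (\<phi> t u) = pr (inv u)" using negI[OF t(1) tn u] u by (simp add: pr_inv)
          then have "pr (\<phi> g (\<phi> t u)) = pr (\<phi> g (inv u))"
            using phi_pr[OF g phi_closed[OF t(1) u]] u by simp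
          also have "\<dots> = inv\<^bsub>Qg\<^esub> (pr w)" using g u gu w by (simp add: phi_inv pr_inv phi_closed)
          finally have e2: "pr (\<phi> g (\<phi> t u)) = inv\<^bsub>Qg\<^esub> (pr w)" .
          have "pr (\<phi> t (\<phi> g (\<phi> t u))) = inv\<^bsub>Qg\<^esub> (pr (\<phi> g (\<phi> t u)))"
            using negI[OF t(1) tn] g t u phi_closed by simp
          also have "\<dots> = pr w" using e2 w pr_closed by simp
          finally show ?thesis using e1 by simp
        qed
        then show ?thesis using t g ig by (simp add: N0_def)
      qed
      show ?thesis
      proof (cases "\<exists>g \<in> carrier G. t \<otimes>\<^bsub>G\<^esub> g \<otimes>\<^bsub>G\<^esub> inv\<^bsub>G\<^esub> t \<otimes>\<^bsub>G\<^esub> inv\<^bsub>G\<^esub> g \<noteq> \<one>\<^bsub>G\<^esub>")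
        case True
        then obtain g where g: "g \<in> carrier G" "t \<otimes>\<^bsub>G\<^esub> g \<otimes>\<^bsub>G\<^esub> inv\<^bsub>G\<^esub> t \<otimes>\<^bsub>G\<^esub> inv\<^bsub>G\<^esub> g \<noteq> \<one>\<^bsub>G\<^esub>" by blast
        show ?thesis by (rule simple_nontriv[OF sg N0_normal C[OF g(1)] g(2)])
      next
        case False
        have tc: "t \<otimes>\<^bsub>G\<^esub> g = g \<otimes>\<^bsub>G\<^esub> t" if g: "g \<in> carrier G" for g
        proof -
          have "t \<otimes>\<^bsub>G\<^esub> g \<otimes>\<^bsub>G\<^esub> inv\<^bsub>G\<^esub> (g \<otimes>\<^bsub>G\<^esub> t) = \<one>\<^bsub>G\<^esub>"
            using False g t by (simp add: G.inv_mult_group G.m_assoc)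
          then show ?thesis using g t
            by (metis G.inv_closed G.inv_inv G.m_closed G.inv_equality)
        qed
        define Z where "Z = {\<one>\<^bsub>G\<^esub>, t}"
        have sZ: "subgroup Z G"
        proof
          show "Z \<subseteq> carrier G" using t by (auto simp: Z_def)
          show "a \<otimes>\<^bsub>G\<^esub> b \<in> Z" if "a \<in> Z" "b \<in> Z" for a b using that t by (auto simp: Z_def)
          show "\<one>\<^bsub>G\<^esub> \<in> Z" by (simp add: Z_def)
          show "inv\<^bsub>G\<^esub> a \<in> Z" if "a \<in> Z" for a using that it by (auto simp: Z_def)
        qed
        have "Z \<lhd> G" unfolding G.normal_inv_iff
        proof (intro conjI sZ ballI)
          fix g z assume g: "g \<in> carrier G" and z: "z \<in> Z"
          have "g \<otimes>\<^bsub>G\<^esub> t \<otimes>\<^bsub>G\<^esub> inv\<^bsub>G\<^esub> g = t \<otimes>\<^bsub>G\<^esub> g \<otimes>\<^bsub>G\<^esub> inv\<^bsub>G\<^esub> g"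
            using tc[OF g] by simp
          also have "\<dots> = t" using g t(1) by (simp add: G.m_assoc)
          finally have "g \<otimes>\<^bsub>G\<^esub> t \<otimes>\<^bsub>G\<^esub> inv\<^bsub>G\<^esub> g = t" .
          then show "g \<otimes>\<^bsub>G\<^esub> z \<otimes>\<^bsub>G\<^esub> inv\<^bsub>G\<^esub> g \<in> Z" using z g by (auto simp: Z_def)
        qed
        moreover have "t \<in> Z" by (simp add: Z_def)
        ultimately have "Z = carrier G" using simple_nontriv[OF sg] t(2) by blast
        have "comm_group G"
        proof (rule G.group_comm_groupI)
          fix a b assume "a \<in> carrier G" "b \<in> carrier G"
          then have "a \<in> Z" "b \<in> Z" using \<open>Z = carrier G\<close> by auto
          then show "a \<otimes>\<^bsub>G\<^esub> b = b \<otimes>\<^bsub>G\<^esub> a" using t by (auto simp: Z_def)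
        qed
        then show ?thesis using nc by simp
      qed
    qed
  next
    case True
    have odd: "odd (det4 (coef g))" if g: "g \<in> carrier G" for g
    proof -
      have "det4 (mm (coef g) (coef (inv\<^bsub>G\<^esub> g))) mod int p = det4 I4 mod int p"
        by (rule det_cong[OF coef_inv[OF g]])
      then have "(det4 (coef g) * det4 (coef (inv\<^bsub>G\<^esub> g))) mod 2 = 1"
        using True by (simp add: det_mm I4_def)
      then have "odd (det4 (coef g) * det4 (coef (inv\<^bsub>G\<^esub> g)))" by (simp only: odd_iff_mod_2_eq_one)
      then show ?thesis using even_mult_iff by blast
    qed
    have sgm: "sg4 (coef (g \<otimes>\<^bsub>G\<^esub> h)) mod 2 = (sg4 (coef g) + sg4 (coef h)) mod 2"
      if g: "g \<in> carrier G" and h: "h \<in> carrier G" for g h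
    proof -
      have "sg4 (coef (g \<otimes>\<^bsub>G\<^esub> h)) mod 2 = sg4 (mm (coef g) (coef h)) mod 2"
        using sg_cong[OF coef_comp[OF g h]] True by simp
      also have "\<dots> = (sg4 (coef g) + sg4 (coef h)) mod 2" by (rule sg_hom[OF odd[OF g] odd[OF h]])
      finally show ?thesis .
    qed
    have sg1: "sg4 (coef \<one>\<^bsub>G\<^esub>) mod 2 = 0 mod 2"
      using sg_cong[OF coef_one] True by (simp add: I4_def)
    have allsg: "sg4 (coef g) mod 2 = 0 mod 2" if g: "g \<in> carrier G" for g
    proof (rule simple_abel_hom[OF sg nc, where op="(+)" and e=0 and q=2 and s="\<lambda>g. sg4 (coef g)"])
      show "\<And>a b a2 b2 :: int. a mod 2 = a2 mod 2 \<Longrightarrow> b mod 2 = b2 mod 2 \<Longrightarrow> (a + b) mod 2 = (a2 + b2) mod 2"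
        by (rule mod_add_cong)
      show "\<And>g h. g \<in> carrier G \<Longrightarrow> h \<in> carrier G \<Longrightarrow> sg4 (coef (g \<otimes>\<^bsub>G\<^esub> h)) mod 2 = (sg4 (coef g) + sg4 (coef h)) mod 2"
        by (rule sgm)
    qed (simp_all add: sg1 g)
    have ev: "even (sg4 (coef g))" if "g \<in> carrier G" for g
      using allsg[OF that] by (simp add: even_iff_mod_2_eq_zero)
    show ?thesis
    proof (rule simple_comm[OF sg nc N0_normal])
      fix g h assume g: "g \<in> carrier G" and h: "h \<in> carrier G"
      have ig: "inv\<^bsub>G\<^esub> g \<in> carrier G" and ih: "inv\<^bsub>G\<^esub> h \<in> carrier G" using g h by auto
      define Mg where "Mg = coef g"
      define Mh where "Mh = coef h"
      define Mg' where "Mg' = coef (inv\<^bsub>G\<^esub> g)"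
      define Mh' where "Mh' = coef (inv\<^bsub>G\<^esub> h)"
      have c1: "meq 2 (coef (g \<otimes>\<^bsub>G\<^esub> h \<otimes>\<^bsub>G\<^esub> inv\<^bsub>G\<^esub> g \<otimes>\<^bsub>G\<^esub> inv\<^bsub>G\<^esub> h)) (mm (mm (mm Mg Mh) Mg') Mh')"
      proof -
        have a: "meq 2 (coef (g \<otimes>\<^bsub>G\<^esub> h)) (mm Mg Mh)" using coef_comp[OF g h] True by (simp add: Mg_def Mh_def)
        have b: "meq 2 (coef (g \<otimes>\<^bsub>G\<^esub> h \<otimes>\<^bsub>G\<^esub> inv\<^bsub>G\<^esub> g)) (mm (coef (g \<otimes>\<^bsub>G\<^esub> h)) Mg')"
          using coef_comp[OF G.m_closed[OF g h] ig] True by (simp add: Mg'_def)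
        have c: "meq 2 (coef (g \<otimes>\<^bsub>G\<^esub> h \<otimes>\<^bsub>G\<^esub> inv\<^bsub>G\<^esub> g \<otimes>\<^bsub>G\<^esub> inv\<^bsub>G\<^esub> h)) (mm (coef (g \<otimes>\<^bsub>G\<^esub> h \<otimes>\<^bsub>G\<^esub> inv\<^bsub>G\<^esub> g)) Mh')"
          using coef_comp[OF G.m_closed[OF G.m_closed[OF g h] ig] ih] True by (simp add: Mh'_def)
        have b': "meq 2 (coef (g \<otimes>\<^bsub>G\<^esub> h \<otimes>\<^bsub>G\<^esub> inv\<^bsub>G\<^esub> g)) (mm (mm Mg Mh) Mg')"
          using b mm_cong[OF a meq_refl] by (rule meq_trans)
        show ?thesis using c mm_cong[OF b' meq_refl] by (rule meq_trans)
      qed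
      have comm: "meq 2 (mm Mh Mg') (mm Mg' Mh)"
        using a3_comm[OF ev[OF h] odd[OF h] ev[OF ig] odd[OF ig]] by (simp add: Mh_def Mg'_def)
      have "mm (mm (mm Mg Mh) Mg') Mh' = mm Mg (mm (mm Mh Mg') Mh')" by (simp add: mm_assoc)
      moreover have "meq 2 (mm Mg (mm (mm Mh Mg') Mh')) (mm Mg (mm (mm Mg' Mh) Mh'))"
        by (intro mm_cong meq_refl comm)
      moreover have "mm Mg (mm (mm Mg' Mh) Mh') = mm (mm Mg Mg') (mm Mh Mh')" by (simp add: mm_assoc)
      moreover have "meq 2 (mm (mm Mg Mg') (mm Mh Mh')) (mm I4 I4)"
        using coef_inv[OF g] coef_inv[OF h] True by (intro mm_cong) (simp_all add: Mg_def Mg'_def Mh_def Mh'_def)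
      ultimately have "meq 2 (mm (mm (mm Mg Mh) Mg') Mh') (mm I4 I4)" using meq_trans by metis
      then have "meq 2 (mm (mm (mm Mg Mh) Mg') Mh') I4" by (simp only: mm_I(1))
      then have "meq (int p) (coef (g \<otimes>\<^bsub>G\<^esub> h \<otimes>\<^bsub>G\<^esub> inv\<^bsub>G\<^esub> g \<otimes>\<^bsub>G\<^esub> inv\<^bsub>G\<^esub> h)) I4"
        using c1 True by (auto intro: meq_trans)
      then show "g \<otimes>\<^bsub>G\<^esub> h \<otimes>\<^bsub>G\<^esub> inv\<^bsub>G\<^esub> g \<otimes>\<^bsub>G\<^esub> inv\<^bsub>G\<^esub> h \<in> N0"
        using N0_iff g h ig ih by simp
    qed
  qed
qed

end

lemma prime3: "Factorial_Ring.prime (3::nat)"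
  unfolding prime_nat_iff
proof (intro conjI allI impI)
  show "1 < (3::nat)" by simp
  fix m :: nat assume d: "m dvd 3"
  then have "m \<le> 3" by (intro dvd_imp_le) auto
  moreover have "m \<noteq> 0" using d by (metis dvd_0_left_iff zero_neq_numeral)
  moreover have "m \<noteq> 2" using d by (auto simp: dvd_eq_mod_eq_0)
  ultimately show "m = 1 \<or> m = 3" by linarith
qed

theorem main_P:
  fixes P :: "('g, 'c) monoid_scheme" and G :: "('h, 'd) monoid_scheme"
  assumes p: "Factorial_Ring.prime p" and gP: "group P" and finP: "finite (carrier P)"
    and card: "\<exists>n. card (carrier P) = p ^ n"
    and gen2: "\<exists>x y. x \<in> carrier P \<and> y \<in> carrier P \<and> generate P {x, y} = carrier P"
    and sg: "simple_group G" and nc: "\<not> comm_group G" and ph: "\<phi> \<in> hom G (AutoGroup P)"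
    and t: "t \<in> carrier G" "t \<noteq> \<one>\<^bsub>G\<^esub>" "t \<otimes>\<^bsub>G\<^esub> t = \<one>\<^bsub>G\<^esub>"
    and m: "m \<in> carrier G" "m \<noteq> \<one>\<^bsub>G\<^esub>" "m \<otimes>\<^bsub>G\<^esub> m \<otimes>\<^bsub>G\<^esub> m = \<one>\<^bsub>G\<^esub>"
  shows "\<forall>g \<in> carrier G. \<forall>w \<in> carrier P. \<phi> g w = w"
proof -
  have gG: "group G" using sg by (simp add: simple_group_def)
  interpret G: group G by (rule gG)
  interpret A: act P p G \<phi>
  proof (intro act.intro pgrp.intro act_axioms.intro pgrp_axioms.intro)
    show "group P" by (fact gP)
    show "group G" by (fact gG)
    show "Factorial_Ring.prime p" by (fact p)
    show "finite (carrier P)" by (fact finP)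
    show "\<phi> \<in> hom G (AutoGroup P)" by (fact ph)
    show "\<exists>n. order P = p ^ n" using card by (simp add: order_def)
  qed
  obtain x y where xy: "x \<in> carrier P" "y \<in> carrier P" "generate P {x, y} = carrier P" using gen2 by blast
  have Kall: "A.Ker = carrier G"
  proof (cases "\<exists>z \<in> carrier P. generate P {z} = carrier P")
    case True
    then obtain z where "z \<in> carrier P" "generate P {z} = carrier P" by blast
    then show ?thesis by (rule A.cyclic_case[OF sg nc])
  next
    case False
    have la: "lin_axioms P x y" using xy False by (simp add: lin_axioms_def)
    interpret L: act_lin P p G \<phi> x y
      by (intro act_lin.intro A.act_axioms lin.intro A.pgrp_axioms la)
    have N0: "A.N0 = carrier G" by (rule L.N0_all[OF sg nc t])
    show ?thesis
    proof (cases "p = 2")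
      case True
      have "m [^]\<^bsub>G\<^esub> (3::nat) = \<one>\<^bsub>G\<^esub>" using m by (simp add: numeral_3_eq_3 G.m_assoc)
      then have "\<forall>w \<in> carrier P. \<phi> m w = w"
        using A.claimC[OF prime3 _ m(1)] True N0 m(1) by simp
      then have "m \<in> A.Ker" using m by (simp add: A.Ker_def)
      then show ?thesis using simple_nontriv[OF sg A.Ker_normal] m(2) by blast
    next
      case False
      have "t [^]\<^bsub>G\<^esub> (2::nat) = \<one>\<^bsub>G\<^esub>" using t by (simp add: numeral_2_eq_2)
      then have "\<forall>w \<in> carrier P. \<phi> t w = w"
        using A.claimC[OF two_is_prime_nat _ t(1)] False N0 t(1) by simp
      then have "t \<in> A.Ker" using t by (simp add: A.Ker_def)
      then show ?thesis using simple_nontriv[OF sg A.Ker_normal] t(2) by blast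
    qed
  qed
  then show ?thesis by (auto simp: A.Ker_def)
qed

locale fld = field K for K (structure)
begin

definition "Jm = (\<zero>, \<one>, \<ominus> \<one>, \<zero>)"
definition "Mm = (\<zero>, \<one>, \<ominus> \<one>, \<ominus> \<one>)"
definition "Idm = (\<one>, \<zero>, \<zero>, \<one>)"
definition "nIdm = (\<ominus> \<one>, \<zero>, \<zero>, \<ominus> \<one>)"

lemma ctr: "SL2_centre K = {Idm, nIdm}" by (simp add: SL2_centre_def Idm_def nIdm_def)

lemma one_ne: "\<one> \<noteq> \<zero>" by simp
lemma mone_ne: "\<ominus> \<one> \<noteq> \<zero>" by (metis add.inv_eq_1_iff one_ne one_closed zero_closed)

lemmas rs = l_minus r_minus minus_minus l_null r_null l_one r_one l_zero r_zero minus_zero r_neg l_neg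

lemma J_in: "Jm \<in> carrier (SL2 K)"
  by (simp add: SL2_def SL2_carrier_def Jm_def minus_eq rs)

lemma M_in: "Mm \<in> carrier (SL2 K)"
  by (simp add: SL2_def SL2_carrier_def Mm_def minus_eq rs)

lemma cosJ: "SL2_centre K #>\<^bsub>SL2 K\<^esub> Jm = {Jm, (\<zero>, \<ominus> \<one>, \<one>, \<zero>)}"
  by (auto simp: r_coset_def ctr SL2_def mat2_mult_def Jm_def Idm_def nIdm_def rs)

lemma JJ: "set_mult (SL2 K) (SL2_centre K #>\<^bsub>SL2 K\<^esub> Jm) (SL2_centre K #>\<^bsub>SL2 K\<^esub> Jm) = SL2_centre K"
  unfolding cosJ
  by (auto simp: set_mult_def ctr SL2_def mat2_mult_def Jm_def Idm_def nIdm_def rs)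

lemma cosM: "SL2_centre K #>\<^bsub>SL2 K\<^esub> Mm = {Mm, (\<zero>, \<ominus> \<one>, \<one>, \<one>)}"
  by (auto simp: r_coset_def ctr SL2_def mat2_mult_def Mm_def Idm_def nIdm_def rs)

lemma MM: "set_mult (SL2 K) (SL2_centre K #>\<^bsub>SL2 K\<^esub> Mm) (SL2_centre K #>\<^bsub>SL2 K\<^esub> Mm) =
   {(\<ominus> \<one>, \<ominus> \<one>, \<one>, \<zero>), (\<one>, \<one>, \<ominus> \<one>, \<zero>)}"
  unfolding cosM
  by (auto simp: set_mult_def SL2_def mat2_mult_def Mm_def rs)

lemma MMM: "set_mult (SL2 K) (set_mult (SL2 K) (SL2_centre K #>\<^bsub>SL2 K\<^esub> Mm) (SL2_centre K #>\<^bsub>SL2 K\<^esub> Mm)) (SL2_centre K #>\<^bsub>SL2 K\<^esub> Mm) = SL2_centre K"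
  unfolding MM cosM
  by (auto simp: set_mult_def ctr SL2_def mat2_mult_def Mm_def Idm_def nIdm_def rs)

lemma J_ne: "SL2_centre K #>\<^bsub>SL2 K\<^esub> Jm \<noteq> SL2_centre K"
proof
  assume "SL2_centre K #>\<^bsub>SL2 K\<^esub> Jm = SL2_centre K"
  then have "Jm \<in> {Idm, nIdm}" using cosJ ctr by auto
  then show False using one_ne mone_ne by (auto simp: Jm_def Idm_def nIdm_def)
qed

lemma M_ne: "SL2_centre K #>\<^bsub>SL2 K\<^esub> Mm \<noteq> SL2_centre K"
proof
  assume "SL2_centre K #>\<^bsub>SL2 K\<^esub> Mm = SL2_centre K"
  then have "Mm \<in> {Idm, nIdm}" using cosM ctr by auto
  then show False using one_ne mone_ne by (auto simp: Mm_def Idm_def nIdm_def)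
qed

lemma J_car: "SL2_centre K #>\<^bsub>SL2 K\<^esub> Jm \<in> carrier (PSL2 K)"
  using J_in by (simp add: PSL2_def carrier_FactGroup)

lemma M_car: "SL2_centre K #>\<^bsub>SL2 K\<^esub> Mm \<in> carrier (PSL2 K)"
  using M_in by (simp add: PSL2_def carrier_FactGroup)

end

theorem lemma3p6:
  fixes P :: "('g, 'c) monoid_scheme"
    and K :: "('a, 'b) ring_scheme"
    and p f :: nat
    and \<phi> :: "('a \<times> 'a \<times> 'a \<times> 'a) set \<Rightarrow> 'g \<Rightarrow> 'g"
  assumes "Factorial_Ring.prime p"
    and "group P" and "finite (carrier P)"
    and "\<exists>n. card (carrier P) = p ^ n"
    and "\<exists>x y. x \<in> carrier P \<and> y \<in> carrier P \<and> generate P {x, y} = carrier P"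
    and "field K" and "finite (carrier K)" and "card (carrier K) = f"
    and "simple_group (PSL2 K)" and "\<not> comm_group (PSL2 K)"
    and "\<phi> \<in> hom (PSL2 K) (AutoGroup P)"
  shows "\<forall>g \<in> carrier (PSL2 K). \<forall>x \<in> carrier P. \<phi> g x = x"
proof -
  interpret K: fld K using assms(6) by (simp add: fld_def)
  have t1: "SL2_centre K #>\<^bsub>SL2 K\<^esub> K.Jm \<in> carrier (PSL2 K)" by (rule K.J_car)
  have t2: "SL2_centre K #>\<^bsub>SL2 K\<^esub> K.Jm \<noteq> \<one>\<^bsub>PSL2 K\<^esub>" using K.J_ne by (simp add: PSL2_def)
  have t3: "(SL2_centre K #>\<^bsub>SL2 K\<^esub> K.Jm) \<otimes>\<^bsub>PSL2 K\<^esub> (SL2_centre K #>\<^bsub>SL2 K\<^esub> K.Jm) = \<one>\<^bsub>PSL2 K\<^esub>"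
    using K.JJ by (simp add: PSL2_def)
  have m1: "SL2_centre K #>\<^bsub>SL2 K\<^esub> K.Mm \<in> carrier (PSL2 K)" by (rule K.M_car)
  have m2: "SL2_centre K #>\<^bsub>SL2 K\<^esub> K.Mm \<noteq> \<one>\<^bsub>PSL2 K\<^esub>" using K.M_ne by (simp add: PSL2_def)
  have m3: "(SL2_centre K #>\<^bsub>SL2 K\<^esub> K.Mm) \<otimes>\<^bsub>PSL2 K\<^esub> (SL2_centre K #>\<^bsub>SL2 K\<^esub> K.Mm) \<otimes>\<^bsub>PSL2 K\<^esub> (SL2_centre K #>\<^bsub>SL2 K\<^esub> K.Mm) = \<one>\<^bsub>PSL2 K\<^esub>"
    using K.MMM by (simp add: PSL2_def)
  show ?thesis
    by (rule main_P[OF assms(1) assms(2) assms(3) assms(4) assms(5) assms(9) assms(10) assms(11) t1 t2 t3 m1 m2 m3])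
qed

end
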